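(* For any channel $W:\mathcal{X}\to\mathcal{P}(\mathcal{Y})$, $E_{sp}(R,W)$ is convex in $R$ on $\mathbb{R}_+$, finite on $(C_{0^+,W},\infty)$, and continuous on the closure of $(C_{0^+,W},\infty)$ in $\mathbb{R}_+$. Furthermore $E_{sp}(R,W)$ is nonincreasing in $R$ on $(0,C_{1,W}]$ and nondecreasing on $[C_{1,W},\infty)$. In particular, with $\chi=\sup\{\alpha:C_{\alpha,W}<\infty\}$, $$E_{sp}(R,W)=\begin{cases}\infty& R<C_{0^+,W}\\ \sup_{\alpha\in(0,1)}\frac{1-\alpha}{\alpha}(C_{\alpha,W}-R)& R=C_{0^+,W}\\ \sup_{\alpha\in[\phi,1)}\frac{1-\alpha}{\alpha}(C_{\alpha,W}-R)& R=C_{\phi,W}\text{ for some }\phi\in(0,1)\\ 0& R\ge C_{\chi,W}\text{ and }\chi=1\\ \sup_{\alpha\in[1,\phi]}\frac{1-\alpha}{\alpha}(C_{\alpha,W}-R)& R=C_{\phi,W}\text{ for some }\phi\in[1,\chi)\\ \sup_{\alpha\in[1,\chi)}\frac{1-\alpha}{\alpha}(C_{\alpha,W}-R)& R\ge C_{\chi,W}\text{ and }\chi>1.\end{cases}$$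
   Context: A channel $W:\mathcal{X}\to\mathcal{P}(\mathcal{Y})$ is any function from a set $\mathcal{X}$ to probability measures on $(\mathsf{Y},\mathcal{Y})$. Rényi divergence $D_\alpha(w\|q)=\frac{1}{\alpha-1}\ln E_\nu[(\frac{dw}{d\nu})^\alpha(\frac{dq}{d\nu})^{1-\alpha}]$ ($\alpha\ne1$), $D_1$ the Kullback–Leibler divergence. Rényi information for finitely supported $p$: $I_\alpha(p;W)=\frac{\alpha}{\alpha-1}\ln E_\nu[(\sum_xp(x)(\frac{dW(x)}{d\nu})^\alpha)^{1/\alpha}]$ ($\alpha\ne1$), $I_1(p;W)=\sum_xp(x)D_1(W(x)\|\sum_{x'}p(x')W(x'))$; Rényi capacity $C_{\alpha,W}=\sup_pI_\alpha(p;W)$, which is nondecreasing in $\alpha$; $C_{0^+,W}=\lim_{\alpha\downarrow0}C_{\alpha,W}$. Sphere packing exponent $E_{sp}(R,W)=\sup_{\alpha\in(0,\infty)}\frac{1-\alpha}{\alpha}(C_{\alpha,W}-R)$ for $R\in\mathbb{R}_+$. *)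

theory Defs
  imports "HOL-Probability.Probability"
begin

(* Channel: W :: 'x => 'y measure, every W x a probability measure on a common
   measurable space (checked by the assumptions of the theorem). *)

(* mixture  q_p = sum_x p(x) W(x)  (used as the reference measure nu) *)
definition mixture :: "'x pmf \<Rightarrow> ('x \<Rightarrow> 'y measure) \<Rightarrow> 'y measure" where
  "mixture p W = measure_pmf p \<bind> W"

definition renyi_info :: "real \<Rightarrow> 'x pmf \<Rightarrow> ('x \<Rightarrow> 'y measure) \<Rightarrow> real" where
  "renyi_info \<alpha> p W =
    (let q = mixture p W in
     if \<alpha> = 1 then (\<Sum>x\<in>set_pmf p. pmf p x * KL_divergence (exp 1) q (W x))
     else \<alpha> / (\<alpha> - 1) *
       ln (\<integral>y. (\<Sum>x\<in>set_pmf p. pmf p x * enn2real (RN_deriv q (W x) y) powr \<alpha>) powr (1 / \<alpha>) \<partial>q))"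

definition renyi_cap :: "real \<Rightarrow> ('x \<Rightarrow> 'y measure) \<Rightarrow> ereal" where
  "renyi_cap \<alpha> W = (SUP p\<in>{p. finite (set_pmf p)}. ereal (renyi_info \<alpha> p W))"

definition renyi_cap0 :: "('x \<Rightarrow> 'y measure) \<Rightarrow> ereal" where
  "renyi_cap0 W = Lim (at_right 0) (\<lambda>\<alpha>. renyi_cap \<alpha> W)"

definition cap_order :: "('x \<Rightarrow> 'y measure) \<Rightarrow> ereal" where
  "cap_order W = Sup {ereal \<alpha> | \<alpha>. 0 < \<alpha> \<and> renyi_cap \<alpha> W < \<infinity>}"

(* C_{a,W} at an extended-real order a; order infinity = limit (sup) of C_alpha *)
definition renyi_cap_ext :: "ereal \<Rightarrow> ('x \<Rightarrow> 'y measure) \<Rightarrow> ereal" where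
  "renyi_cap_ext a W = (if a = \<infinity> then (SUP \<alpha>\<in>{0<..}. renyi_cap \<alpha> W)
                        else renyi_cap (real_of_ereal a) W)"

definition sp_term :: "real \<Rightarrow> real \<Rightarrow> ('x \<Rightarrow> 'y measure) \<Rightarrow> ereal" where
  "sp_term \<alpha> R W = ereal ((1 - \<alpha>) / \<alpha>) * (renyi_cap \<alpha> W - ereal R)"

definition E_sp :: "real \<Rightarrow> ('x \<Rightarrow> 'y measure) \<Rightarrow> ereal" where
  "E_sp R W = (SUP \<alpha>\<in>{0<..}. sp_term \<alpha> R W)"

end

theory Submission
  imports Defs
begin


lemma bern1: fixes x t :: real assumes "0 \<le> x" "0 < t" "t < 1" shows "x powr t \<le> t * x + (1 - t)"
proof (cases "x = 0")
  case True then show ?thesis using assms by auto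
next
  case False
  have "x powr t * 1 powr (1 - t) \<le> t * x + (1 - t) * 1"
    by (rule Youngs_inequality_0) (use assms False in auto)
  then show ?thesis by simp
qed

lemma bern2: fixes x t :: real assumes "0 \<le> x" "1 < t" shows "t * x + (1 - t) \<le> x powr t"
proof -
  have "(x powr t) powr (1/t) \<le> (1/t) * (x powr t) + (1 - 1/t)"
    by (rule bern1) (use assms in auto)
  also have "(x powr t) powr (1/t) = x" using assms by (simp add: powr_powr)
  finally have "x \<le> (1/t) * (x powr t) + (1 - 1/t)" .
  then have "t * x \<le> t * ((1/t) * (x powr t) + (1 - 1/t))" using assms by simp
  also have "\<dots> = x powr t + t - 1" using assms by (simp add: field_simps)
  finally show ?thesis by simp
qed

lemma ln_le_minus1: "0 < (t::real) \<Longrightarrow> ln t \<le> t - 1"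
  by (rule ln_le_minus_one)

lemma mult_exp: "0 < (x::real) \<Longrightarrow> x * exp y = exp (ln x + y)"
  by (simp add: exp_add)

lemma pow_ident: fixes f g a :: real assumes "0 < f" "0 < g"
  shows "f powr a * g powr (1 - a) = f * (f / g) powr (a - 1)"
  using assms by (simp add: powr_def ln_div ln_mult mult_exp exp_add[symmetric] algebra_simps)

lemma pow_ident2: fixes r c t :: real assumes "0 < r" "0 < c" "t \<noteq> 0"
  shows "r powr s = c powr (s/t) * (r powr t / c) powr (s/t)"
  using assms by (simp add: powr_def ln_div ln_mult mult_exp exp_add[symmetric] algebra_simps)

lemma young_lt1: fixes m g a A :: real
  assumes "0 \<le> m" "0 \<le> g" "0 < a" "a < 1" "0 < A"
  shows "m powr a * g powr (1 - a) \<le> A powr a * (a * m / A + (1 - a) * g)"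
proof (cases "m = 0 \<or> g = 0")
  case True then show ?thesis using assms by (auto intro!: mult_nonneg_nonneg add_nonneg_nonneg)
next
  case False
  then have mg: "0 < m" "0 < g" using assms by auto
  have "(m/A) powr a * g powr (1 - a) \<le> a * (m/A) + (1 - a) * g"
    by (rule Youngs_inequality_0) (use assms mg in auto)
  then have "A powr a * ((m/A) powr a * g powr (1 - a)) \<le> A powr a * (a * (m/A) + (1 - a) * g)"
    by (rule mult_left_mono) simp
  moreover have "A powr a * ((m/A) powr a * g powr (1 - a)) = m powr a * g powr (1 - a)"
    using mg assms by (simp add: powr_divide)
  ultimately show ?thesis by simp
qed

lemma young_gt1: fixes m g a A :: real
  assumes "0 \<le> m" "0 < g" "1 < a" "0 < A"
  shows "A powr a * (a * m / A + (1 - a) * g) \<le> m powr a * g powr (1 - a)"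
proof -
  define x where "x = (m / A) / g"
  have x0: "0 \<le> x" using assms by (simp add: x_def)
  have "a * x + (1 - a) \<le> x powr a" by (rule bern2[OF x0 assms(3)])
  then have "g * (a * x + (1 - a)) \<le> g * x powr a" using assms by simp
  then have "A powr a * (g * (a * x + (1 - a))) \<le> A powr a * (g * x powr a)"
    by (rule mult_left_mono) simp
  moreover have "g * (a * x + (1 - a)) = a * m / A + (1 - a) * g" using assms by (simp add: x_def field_simps)
  moreover have "A powr a * (g * x powr a) = m powr a * g powr (1 - a)"
  proof (cases "m = 0")
    case True then show ?thesis using assms by (simp add: x_def)
  next
    case False
    then have "0 < m" using assms by simp
    then show ?thesis using assms unfolding x_def
      by (simp add: powr_def ln_div ln_mult mult_exp exp_add[symmetric] algebra_simps)
  qed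
  ultimately show ?thesis by simp
qed

lemma J_lt: fixes f g c a b :: real
  assumes "0 \<le> f" "0 < g" "0 < c" "0 < (a - 1) / (b - 1)" "(a - 1) / (b - 1) < 1" "b \<noteq> 1"
  shows "f powr a * g powr (1 - a) \<le> c powr ((a - 1) / (b - 1)) *
      (((a - 1) / (b - 1)) * (f powr b * g powr (1 - b)) / c + (1 - (a - 1) / (b - 1)) * f)"
proof (cases "f = 0")
  case True then show ?thesis by simp
next
  case False
  then have f0: "0 < f" using assms by simp
  define t where "t = (a - 1) / (b - 1)"
  define r where "r = f / g"
  have r0: "0 < r" using f0 assms by (simp add: r_def)
  define u where "u = r powr (b - 1) / c"
  have u0: "0 \<le> u" using assms by (simp add: u_def)
  have "r powr (a - 1) = c powr t * u powr t"
    unfolding u_def t_def by (rule pow_ident2) (use r0 assms in auto)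
  also have "\<dots> \<le> c powr t * (t * u + (1 - t))"
    by (rule mult_left_mono[OF bern1[OF u0]]) (use assms in \<open>auto simp: t_def\<close>)
  finally have "f * r powr (a - 1) \<le> f * (c powr t * (t * u + (1 - t)))"
    using f0 by simp
  moreover have "f powr a * g powr (1 - a) = f * r powr (a - 1)"
    unfolding r_def by (rule pow_ident) (use f0 assms in auto)
  moreover have "f powr b * g powr (1 - b) = f * r powr (b - 1)"
    unfolding r_def by (rule pow_ident) (use f0 assms in auto)
  ultimately show ?thesis by (simp add: t_def u_def algebra_simps)
qed

lemma J_gt: fixes f g c a b :: real
  assumes "0 \<le> f" "0 < g" "0 < c" "1 < (a - 1) / (b - 1)" "b \<noteq> 1"
  shows "c powr ((a - 1) / (b - 1)) *
      (((a - 1) / (b - 1)) * (f powr b * g powr (1 - b)) / c + (1 - (a - 1) / (b - 1)) * f)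
      \<le> f powr a * g powr (1 - a)"
proof (cases "f = 0")
  case True then show ?thesis by simp
next
  case False
  then have f0: "0 < f" using assms by simp
  define t where "t = (a - 1) / (b - 1)"
  define r where "r = f / g"
  have r0: "0 < r" using f0 assms by (simp add: r_def)
  define u where "u = r powr (b - 1) / c"
  have u0: "0 \<le> u" using assms by (simp add: u_def)
  have "c powr t * (t * u + (1 - t)) \<le> c powr t * u powr t"
    by (rule mult_left_mono[OF bern2[OF u0]]) (use assms in \<open>auto simp: t_def\<close>)
  also have "c powr t * u powr t = r powr (a - 1)"
    unfolding u_def t_def by (rule pow_ident2[symmetric]) (use r0 assms in auto)
  finally have "f * (c powr t * (t * u + (1 - t))) \<le> f * r powr (a - 1)"
    using f0 by simp
  moreover have "f powr a * g powr (1 - a) = f * r powr (a - 1)"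
    unfolding r_def by (rule pow_ident) (use f0 assms in auto)
  moreover have "f powr b * g powr (1 - b) = f * r powr (b - 1)"
    unfolding r_def by (rule pow_ident) (use f0 assms in auto)
  ultimately show ?thesis by (simp add: t_def u_def algebra_simps)
qed

lemma K1: fixes f c a :: real assumes "0 \<le> f" "0 < c"
  shows "(a - 1) * (f * ln f) \<le> f powr a / c - f + f * ln c"
proof (cases "f = 0")
  case True then show ?thesis by simp
next
  case False
  then have f0: "0 < f" using assms by simp
  have "ln (f powr (a - 1) / c) \<le> f powr (a - 1) / c - 1"
    by (rule ln_le_minus_one) (use f0 assms in simp)
  then have "(a - 1) * ln f - ln c \<le> f powr (a - 1) / c - 1"
    using f0 assms by (simp add: ln_div ln_powr)
  then have "f * ((a - 1) * ln f - ln c) \<le> f * (f powr (a - 1) / c - 1)"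
    using f0 by simp
  moreover have "f * f powr (a - 1) = f powr a" using f0 by (simp add: powr_def mult_exp algebra_simps)
  ultimately show ?thesis by (simp add: algebra_simps)
qed

lemma K2: fixes f g c a :: real assumes "0 \<le> f" "0 < g" "0 < c"
  shows "(a - 1) * (f * ln f) \<le> f powr a * g powr (1 - a) / c - f + f * ln c + (a - 1) * (f * ln g)"
proof (cases "f = 0")
  case True then show ?thesis by simp
next
  case False
  then have f0: "0 < f" using assms by simp
  have "ln ((f/g) powr (a - 1) / c) \<le> (f/g) powr (a - 1) / c - 1"
    by (rule ln_le_minus_one) (use f0 assms in simp)
  then have "(a - 1) * (ln f - ln g) - ln c \<le> (f/g) powr (a - 1) / c - 1"
    using f0 assms by (simp add: ln_div ln_powr)
  then have "f * ((a - 1) * (ln f - ln g) - ln c) \<le> f * ((f/g) powr (a - 1) / c - 1)"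
    using f0 by simp
  moreover have "f * (f/g) powr (a - 1) = f powr a * g powr (1 - a)"
    using pow_ident[OF f0 assms(2), of a] by simp
  ultimately show ?thesis by (simp add: algebra_simps)
qed

lemma power_mean_mono: fixes w f :: "'a \<Rightarrow> real"
  assumes P: "finite P" and w: "\<And>x. x \<in> P \<Longrightarrow> 0 \<le> w x" and sw: "(\<Sum>x\<in>P. w x) = 1"
    and f: "\<And>x. x \<in> P \<Longrightarrow> 0 \<le> f x" and ab: "0 < a" "a < b"
  shows "(\<Sum>x\<in>P. w x * f x powr a) powr (1/a) \<le> (\<Sum>x\<in>P. w x * f x powr b) powr (1/b)"
proof -
  define c where "c = (\<Sum>x\<in>P. w x * f x powr b)"
  have c0: "0 \<le> c" unfolding c_def using w f by (auto intro!: sum_nonneg)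
  show ?thesis
  proof (cases "c = 0")
    case True
    then have "\<forall>x\<in>P. w x * f x powr b = 0" unfolding c_def using P w f
      by (subst (asm) sum_nonneg_eq_0_iff) auto
    then have "\<forall>x\<in>P. w x * f x powr a = 0" by auto
    then have "(\<Sum>x\<in>P. w x * f x powr a) = 0" by (rule sum.neutral)
    then show ?thesis using True by (simp add: c_def)
  next
    case False
    then have cp: "0 < c" using c0 by simp
    define t where "t = a / b"
    have t: "0 < t" "t < 1" using ab by (auto simp: t_def)
    have "\<And>x. x \<in> P \<Longrightarrow> w x * f x powr a \<le> w x * (c powr t * (t * (f x powr b / c) + (1 - t)))"
    proof -
      fix x assume x: "x \<in> P"
      have "f x powr a = c powr t * (f x powr b / c) powr t"
        using cp f[OF x] ab by (simp add: t_def powr_divide powr_powr)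
      also have "\<dots> \<le> c powr t * (t * (f x powr b / c) + (1 - t))"
        by (rule mult_left_mono[OF bern1]) (use cp t in auto)
      finally show "w x * f x powr a \<le> w x * (c powr t * (t * (f x powr b / c) + (1 - t)))"
        using w[OF x] by (rule mult_left_mono)
    qed
    then have "(\<Sum>x\<in>P. w x * f x powr a) \<le> (\<Sum>x\<in>P. w x * (c powr t * (t * (f x powr b / c) + (1 - t))))"
      by (rule sum_mono)
    also have "\<dots> = (\<Sum>x\<in>P. (c powr t * t / c) * (w x * f x powr b) + (c powr t * (1 - t)) * w x)"
      by (intro sum.cong) (auto simp: algebra_simps)
    also have "\<dots> = (c powr t * t / c) * (\<Sum>x\<in>P. w x * f x powr b) + (c powr t * (1 - t)) * (\<Sum>x\<in>P. w x)"
      by (simp add: sum.distrib sum_distrib_left)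
    also have "\<dots> = c powr t" using cp sw by (simp add: c_def[symmetric] algebra_simps)
    finally have le: "(\<Sum>x\<in>P. w x * f x powr a) \<le> c powr t" .
    have "(\<Sum>x\<in>P. w x * f x powr a) powr (1/a) \<le> (c powr t) powr (1/a)"
      by (rule powr_mono2) (use le ab w f in \<open>auto intro!: sum_nonneg\<close>)
    also have "\<dots> = c powr (1/b)" using ab by (simp add: powr_powr t_def)
    finally show ?thesis by (simp add: c_def)
  qed
qed

lemma pow_ident3: fixes m A b :: real assumes "0 < m" "0 < A"
  shows "m powr b * (m / A) powr (1 - b) = A powr (b - 1) * m"
  using assms by (simp add: powr_def ln_div ln_mult mult_exp exp_add[symmetric] algebra_simps)

lemma arith_neg: fixes a b X Y :: real assumes "a < 1" "b \<noteq> 1" "(a - 1) / (b - 1) * b * Y \<le> a * X"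
  shows "a / (a - 1) * X \<le> b / (b - 1) * Y"
proof -
  have "a / (a - 1) * X - b / (b - 1) * Y = (a * X - (a - 1) / (b - 1) * b * Y) / (a - 1)"
    using assms by (simp add: field_simps)
  also have "\<dots> \<le> 0" using assms by (intro divide_nonneg_neg) auto
  finally show ?thesis by simp
qed

lemma arith_pos: fixes a b X Y :: real assumes "1 < a" "b \<noteq> 1" "a * X \<le> (a - 1) / (b - 1) * b * Y"
  shows "a / (a - 1) * X \<le> b / (b - 1) * Y"
proof -
  have "a / (a - 1) * X - b / (b - 1) * Y = (a * X - (a - 1) / (b - 1) * b * Y) / (a - 1)"
    using assms by (simp add: field_simps)
  also have "\<dots> \<le> 0" using assms by (intro divide_nonpos_pos) auto
  finally show ?thesis by simp
qed




locale chanp =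
  fixes W :: "'x \<Rightarrow> 'y measure" and M :: "'y measure" and p :: "'x pmf"
  assumes probW: "\<And>x. prob_space (W x)" and setsW: "\<And>x. sets (W x) = sets M"
    and finP: "finite (set_pmf p)"
begin

definition "q = mixture p W"
definition "f x y = enn2real (RN_deriv q (W x) y)"

lemma Wmeas: "W \<in> measure_pmf p \<rightarrow>\<^sub>M subprob_algebra M"
  unfolding measurable_pmf_measure1 space_subprob_algebra
  using probW setsW prob_space_imp_subprob_space by blast

lemma sets_q[measurable_cong]: "sets q = sets M"
  unfolding q_def mixture_def by (rule sets_bind) (auto simp: setsW)

lemma space_q: "space q = space M"
  using sets_q by (rule sets_eq_imp_space_eq)

lemma prob_q: "prob_space q"
  unfolding q_def mixture_def
  by (rule measure_pmf.prob_space_bind[OF _ Wmeas]) (auto simp: probW)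

lemma emeasure_q: "A \<in> sets M \<Longrightarrow> emeasure q A = (\<Sum>x\<in>set_pmf p. ennreal (pmf p x) * emeasure (W x) A)"
  unfolding q_def mixture_def
  apply (subst emeasure_bind[OF _ Wmeas])
    apply auto[2]
  apply (subst nn_integral_measure_pmf_finite[OF finP])
  apply (auto simp: mult.commute)
  done


lemma ac: "x \<in> set_pmf p \<Longrightarrow> absolutely_continuous q (W x)"
  unfolding absolutely_continuous_def
proof
  fix A assume x: "x \<in> set_pmf p" and A: "A \<in> null_sets q"
  then have As: "A \<in> sets M" using sets_q by (auto simp: null_sets_def)
  have "(\<Sum>x\<in>set_pmf p. ennreal (pmf p x) * emeasure (W x) A) = 0"
    using A emeasure_q[OF As] by (auto simp: null_sets_def)
  then have "ennreal (pmf p x) * emeasure (W x) A = 0"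
    using finP x by (subst (asm) sum_eq_0_iff) auto
  then have "emeasure (W x) A = 0" using x by (auto simp: set_pmf_iff)
  then show "A \<in> null_sets (W x)" using As setsW by (auto simp: null_sets_def)
qed

lemma f_meas[measurable]: "f x \<in> borel_measurable M"
  unfolding f_def using borel_measurable_RN_deriv[of q "W x"]
  by (simp add: measurable_cong_sets[OF sets_q refl, symmetric])

lemma f_meas_q[measurable]: "f x \<in> borel_measurable q"
  using f_meas by (simp add: measurable_cong_sets[OF sets_q refl])

lemma f_nonneg: "0 \<le> f x y" unfolding f_def by simp

lemma density_f: assumes x: "x \<in> set_pmf p" shows "density q (\<lambda>y. ennreal (f x y)) = W x"
proof -
  interpret q: prob_space q by (rule prob_q)
  interpret Wx: prob_space "W x" by (rule probW)
  have ac: "absolutely_continuous q (W x)" "sets (W x) = sets q" using ac x setsW sets_q by auto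
  have fin: "AE y in q. RN_deriv q (W x) y \<noteq> \<infinity>"
    by (rule q.RN_deriv_finite[OF _ ac]) (simp add: Wx.sigma_finite_measure_axioms)
  have "density q (\<lambda>y. ennreal (f x y)) = density q (RN_deriv q (W x))"
    by (rule density_cong) (use fin in \<open>auto simp: f_def less_top\<close>)
  also have "\<dots> = W x" by (rule q.density_RN_deriv[OF ac])
  finally show ?thesis .
qed

lemma nn_int_f: assumes x: "x \<in> set_pmf p" and A: "A \<in> sets M"
  shows "(\<integral>\<^sup>+y. ennreal (f x y) * indicator A y \<partial>q) = emeasure (W x) A"
proof -
  have "emeasure (W x) A = emeasure (density q (\<lambda>y. ennreal (f x y))) A" using density_f[OF x] by simp
  also have "\<dots> = (\<integral>\<^sup>+y. ennreal (f x y) * indicator A y \<partial>q)"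
    using A sets_q by (subst emeasure_density) (auto simp: mult.commute)
  finally show ?thesis by simp
qed

lemma sum1: "AE y in q. (\<Sum>x\<in>set_pmf p. pmf p x * f x y) = 1"
proof -
  interpret q: prob_space q by (rule prob_q)
  have "AE y in q. ennreal (\<Sum>x\<in>set_pmf p. pmf p x * f x y) = (\<lambda>_. 1) y"
  proof (rule q.density_unique_finite_measure)
    show "(\<lambda>y. ennreal (\<Sum>x\<in>set_pmf p. pmf p x * f x y)) \<in> borel_measurable q" by measurable
    fix A assume A: "A \<in> sets q"
    then have As: "A \<in> sets M" using sets_q by simp
    have "(\<integral>\<^sup>+y. ennreal (\<Sum>x\<in>set_pmf p. pmf p x * f x y) * indicator A y \<partial>q)
        = (\<integral>\<^sup>+y. (\<Sum>x\<in>set_pmf p. ennreal (pmf p x) * (ennreal (f x y) * indicator A y)) \<partial>q)"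
      by (intro nn_integral_cong) (auto simp: sum_ennreal[symmetric] f_nonneg ennreal_mult sum_distrib_left sum_distrib_right mult.assoc mult.left_commute intro!: sum.cong)
    also have "\<dots> = (\<Sum>x\<in>set_pmf p. ennreal (pmf p x) * (\<integral>\<^sup>+y. ennreal (f x y) * indicator A y \<partial>q))"
      using A by (subst nn_integral_sum) (auto simp: nn_integral_cmult)
    also have "\<dots> = (\<Sum>x\<in>set_pmf p. ennreal (pmf p x) * emeasure (W x) A)"
      by (intro sum.cong refl) (simp add: nn_int_f As)
    also have "\<dots> = emeasure q A" using emeasure_q[OF As] by simp
    also have "\<dots> = (\<integral>\<^sup>+y. 1 * indicator A y \<partial>q)" using A by simp
    finally show "(\<integral>\<^sup>+y. ennreal (\<Sum>x\<in>set_pmf p. pmf p x * f x y) * indicator A y \<partial>q) = (\<integral>\<^sup>+y. 1 * indicator A y \<partial>q)" .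
  qed auto
  then show ?thesis
    by eventually_elim (auto intro!: sum_nonneg simp: f_nonneg)
qed


lemma pmf_pos: "x \<in> set_pmf p \<Longrightarrow> 0 < pmf p x"
  by (simp add: pmf_positive)

lemma sumw: "(\<Sum>x\<in>set_pmf p. pmf p x) = 1"
  using finP by (rule sum_pmf_eq_1) simp

lemma Pne: "set_pmf p \<noteq> {}" by (rule set_pmf_not_empty)

definition "Kf = (\<Sum>x\<in>set_pmf p. 1 / pmf p x)"
definition "wmin = Min (pmf p ` set_pmf p)"

lemma wmin_pos: "0 < wmin"
  unfolding wmin_def using finP Pne by (subst Min_gr_iff) (auto simp: pmf_pos)

lemma wmin_le: "x \<in> set_pmf p \<Longrightarrow> wmin \<le> pmf p x"
  unfolding wmin_def using finP by auto

lemma Kf_nonneg: "0 \<le> Kf" unfolding Kf_def by (auto intro!: sum_nonneg)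

lemma good: "AE y in q. (\<Sum>x\<in>set_pmf p. pmf p x * f x y) = 1 \<and> (\<forall>x\<in>set_pmf p. f x y \<le> Kf)
   \<and> (\<exists>x\<in>set_pmf p. 1 \<le> f x y)"
  using sum1
proof eventually_elim
  case (elim y)
  have b: "f x y \<le> Kf" if x: "x \<in> set_pmf p" for x
  proof -
    have "pmf p x * f x y \<le> (\<Sum>x\<in>set_pmf p. pmf p x * f x y)"
      using finP x by (intro member_le_sum) (auto simp: f_nonneg)
    then have "pmf p x * f x y \<le> 1" using elim by simp
    then have "f x y \<le> 1 / pmf p x" using pmf_pos[OF x] by (simp add: field_simps)
    also have "\<dots> \<le> Kf" unfolding Kf_def using finP x
      by (intro member_le_sum) auto
    finally show ?thesis .
  qed
  have e: "\<exists>x\<in>set_pmf p. 1 \<le> f x y"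
  proof (rule ccontr)
    assume "\<not> ?thesis"
    then have lt: "\<And>x. x \<in> set_pmf p \<Longrightarrow> pmf p x * f x y < pmf p x * 1"
      using pmf_pos by (auto intro!: mult_strict_left_mono)
    have "(\<Sum>x\<in>set_pmf p. pmf p x * f x y) < (\<Sum>x\<in>set_pmf p. pmf p x * 1)"
      using finP Pne lt by (intro sum_strict_mono) auto
    then show False using elim sumw by simp
  qed
  show ?case using elim b e by auto
qed

definition "Mf a y = (\<Sum>x\<in>set_pmf p. pmf p x * f x y powr a) powr (1/a)"
definition "Aa a = integral\<^sup>L q (Mf a)"

lemma Mf_meas[measurable]: "Mf a \<in> borel_measurable q"
  unfolding Mf_def by measurable

lemma Mf_nonneg: "0 \<le> Mf a y" unfolding Mf_def by simp

lemma Mf_pow: "0 < a \<Longrightarrow> Mf a y powr a = (\<Sum>x\<in>set_pmf p. pmf p x * f x y powr a)"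
  unfolding Mf_def by (simp add: powr_powr sum_nonneg f_nonneg)

lemma Mf_bounds: assumes a: "0 < a"
  shows "AE y in q. Mf a y \<le> Kf \<and> wmin powr (1/a) \<le> Mf a y"
  using good
proof eventually_elim
  case (elim y)
  have "(\<Sum>x\<in>set_pmf p. pmf p x * f x y powr a) \<le> (\<Sum>x\<in>set_pmf p. pmf p x * Kf powr a)"
    using elim a by (intro sum_mono mult_left_mono powr_mono2) (auto simp: f_nonneg)
  also have "\<dots> = Kf powr a" by (simp add: sum_distrib_right[symmetric] sumw)
  finally have "Mf a y \<le> (Kf powr a) powr (1/a)" unfolding Mf_def
    using a by (intro powr_mono2) (auto intro!: sum_nonneg simp: f_nonneg)
  also have "\<dots> = Kf" using a Kf_nonneg by (simp add: powr_powr)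
  finally have up: "Mf a y \<le> Kf" .
  from elim obtain x where x: "x \<in> set_pmf p" "1 \<le> f x y" by auto
  have "wmin \<le> pmf p x * f x y powr a"
  proof -
    have "1 \<le> f x y powr a" using x a by (simp add: ge_one_powr_ge_zero)
    then have "pmf p x * 1 \<le> pmf p x * f x y powr a" using pmf_pos[OF x(1)] by (intro mult_left_mono) auto
    then show ?thesis using wmin_le[OF x(1)] by simp
  qed
  also have "\<dots> \<le> (\<Sum>x\<in>set_pmf p. pmf p x * f x y powr a)"
    using finP x by (intro member_le_sum) (auto simp: f_nonneg)
  finally have "wmin powr (1/a) \<le> Mf a y" unfolding Mf_def
    using a wmin_pos by (intro powr_mono2) auto
  with up show ?case by simp
qed

lemma integrable_bdd: fixes h :: "'y \<Rightarrow> real" assumes "h \<in> borel_measurable q" "AE y in q. \<bar>h y\<bar> \<le> B"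
  shows "integrable q h"
proof -
  interpret q: prob_space q by (rule prob_q)
  show ?thesis
    by (rule q.integrable_const_bound[where B=B]) (use assms in auto)
qed

lemma Mf_int: "0 < a \<Longrightarrow> integrable q (Mf a)"
  by (rule integrable_bdd[where B=Kf]) (use Mf_bounds in \<open>auto elim: AE_mp simp: Mf_nonneg\<close>)

lemma Aa_pos: assumes "0 < a" shows "0 < Aa a"
proof -
  interpret q: prob_space q by (rule prob_q)
  have "wmin powr (1/a) \<le> Aa a"
    unfolding Aa_def using integral_mono_AE[of q "\<lambda>_. wmin powr (1/a)" "Mf a"] Mf_bounds[OF assms] Mf_int[OF assms]
    by (auto elim: AE_mp simp: q.prob_space)
  moreover have "0 < wmin powr (1/a)" using wmin_pos by simp
  ultimately show ?thesis by linarith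
qed


lemma I_ne1: "a \<noteq> 1 \<Longrightarrow> renyi_info a p W = a / (a - 1) * ln (Aa a)"
  unfolding renyi_info_def Aa_def Mf_def f_def q_def Let_def by simp

lemma fpow_int: assumes "0 < a" "x \<in> set_pmf p" shows "integrable q (\<lambda>y. f x y powr a)"
  by (rule integrable_bdd[where B="Kf powr a"])
    (use good assms in \<open>auto elim!: AE_mp intro!: powr_mono2 simp: f_nonneg\<close>)

lemma flnf_bound: fixes t K :: real assumes "0 \<le> t" "t \<le> K" shows "\<bar>t * ln t\<bar> \<le> 1 + K * K"
proof (cases "t = 0")
  case True then show ?thesis using zero_le_square[of K] by simp
next
  case False
  then have t: "0 < t" using assms by simp
  have "ln t \<le> t - 1" using t by (rule ln_le_minus_one)
  then have up: "t * ln t \<le> t * (t - 1)" using t by (intro mult_left_mono) auto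
  have "ln (1/t) \<le> 1/t - 1" using t by (intro ln_le_minus_one) auto
  then have "1 - 1/t \<le> ln t" using t by (simp add: ln_div)
  then have "t * (1 - 1/t) \<le> t * ln t" using t by (intro mult_left_mono) auto
  moreover have "t * (1 - 1/t) = t - 1" using t by (simp add: field_simps)
  ultimately have lo: "t - 1 \<le> t * ln t" by linarith
  have "t * t \<le> K * K" using assms t by (intro mult_mono) auto
  then have tt: "t * (t - 1) \<le> K * K" using t by (simp add: algebra_simps)
  have kk: "0 \<le> K * K" by simp
  show ?thesis unfolding abs_le_iff using up lo t tt kk by linarith
qed

lemma flnf_int: assumes "x \<in> set_pmf p" shows "integrable q (\<lambda>y. f x y * ln (f x y))"
  by (rule integrable_bdd[where B="1 + Kf * Kf"])
    (use good assms in \<open>auto elim!: AE_mp intro!: flnf_bound simp: f_nonneg\<close>)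

lemma KL_eq: assumes x: "x \<in> set_pmf p"
  shows "KL_divergence (exp 1) q (W x) = integral\<^sup>L q (\<lambda>y. f x y * ln (f x y))"
proof -
  have "KL_divergence (exp 1) q (W x) = integral\<^sup>L (W x) (\<lambda>y. ln (f x y))"
    unfolding KL_divergence_def entropy_density_def f_def by (simp add: log_def comp_def)
  also have "\<dots> = integral\<^sup>L (density q (\<lambda>y. ennreal (f x y))) (\<lambda>y. ln (f x y))"
    using density_f[OF x] by simp
  also have "\<dots> = integral\<^sup>L q (\<lambda>y. f x y * ln (f x y))"
    by (subst integral_density) (auto simp: f_nonneg)
  finally show ?thesis .
qed

definition "I1 = integral\<^sup>L q (\<lambda>y. \<Sum>x\<in>set_pmf p. pmf p x * (f x y * ln (f x y)))"

lemma I_1: "renyi_info 1 p W = I1"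
proof -
  have "renyi_info 1 p W = (\<Sum>x\<in>set_pmf p. pmf p x * KL_divergence (exp 1) q (W x))"
    unfolding renyi_info_def q_def Let_def by simp
  also have "\<dots> = (\<Sum>x\<in>set_pmf p. pmf p x * integral\<^sup>L q (\<lambda>y. f x y * ln (f x y)))"
    by (intro sum.cong refl) (simp add: KL_eq)
  also have "\<dots> = (\<Sum>x\<in>set_pmf p. integral\<^sup>L q (\<lambda>y. pmf p x * (f x y * ln (f x y))))"
    by simp
  also have "\<dots> = I1" unfolding I1_def
    by (rule Bochner_Integration.integral_sum[symmetric, where f="\<lambda>x y. pmf p x * (f x y * ln (f x y))"]) (auto intro!: flnf_int integrable_mult_right)
  finally show ?thesis .
qed


definition "sfun a g y = (\<Sum>x\<in>set_pmf p. pmf p x * (f x y powr a * g y powr (1 - a)))"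

lemma meas_qM: "h \<in> borel_measurable q \<longleftrightarrow> h \<in> borel_measurable M"
  by (simp add: measurable_cong_sets[OF sets_q refl])

lemma sfun_meas[measurable]: assumes "g \<in> borel_measurable q" shows "sfun a g \<in> borel_measurable q"
proof -
  have [measurable]: "g \<in> borel_measurable M" using assms meas_qM by simp
  have "sfun a g \<in> borel_measurable M" unfolding sfun_def by measurable
  then show ?thesis using meas_qM by simp
qed

lemma sfun_nonneg: "0 \<le> sfun a g y"
  unfolding sfun_def by (auto intro!: sum_nonneg mult_nonneg_nonneg)

lemma sfun_Mf: "0 < a \<Longrightarrow> sfun a g y = Mf a y powr a * g y powr (1 - a)"
  unfolding sfun_def by (simp add: Mf_pow sum_distrib_right mult.assoc)

lemma Aa_int: "0 < a \<Longrightarrow> integral\<^sup>L q (Mf a) = Aa a" by (simp add: Aa_def)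

lemma H_lt1: assumes a: "0 < a" "a < 1" and g: "g \<in> borel_measurable q" "AE y in q. 0 \<le> g y"
    "integrable q g" "integral\<^sup>L q g = 1"
  shows "integrable q (sfun a g) \<and> integral\<^sup>L q (sfun a g) \<le> Aa a powr a"
proof -
  define A where "A = Aa a"
  have A0: "0 < A" using Aa_pos a by (simp add: A_def)
  define R where "R y = A powr a * (a * Mf a y / A + (1 - a) * g y)" for y
  have Rint: "integrable q R" unfolding R_def using Mf_int[of a] a g
    by (auto intro!: integrable_mult_right integrable_add integrable_divide)
  have le: "AE y in q. sfun a g y \<le> R y"
    using g(2) proof eventually_elim
    case (elim y)
    show ?case unfolding R_def sfun_Mf[OF a(1)]
      by (rule young_lt1) (use elim a A0 in \<open>auto simp: Mf_nonneg\<close>)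
  qed
  have int: "integrable q (sfun a g)"
    by (rule Bochner_Integration.integrable_bound[OF Rint]) (use le g in \<open>auto elim!: AE_mp simp: sfun_nonneg\<close>)
  have "integral\<^sup>L q (sfun a g) \<le> integral\<^sup>L q R" by (rule integral_mono_AE[OF int Rint le])
  also have "integral\<^sup>L q R = A powr a * (a * integral\<^sup>L q (Mf a) / A + (1 - a) * integral\<^sup>L q g)"
    unfolding R_def using Mf_int[of a] a g by (simp add: Bochner_Integration.integral_add integrable_divide)
  also have "\<dots> = A powr a" using A0 g a by (simp add: A_def[symmetric] Aa_def[symmetric])
  finally show ?thesis using int by (simp add: A_def)
qed

lemma H_gt1: assumes a: "1 < a" and g: "g \<in> borel_measurable q" "AE y in q. 0 < g y"
    "integrable q g" "integral\<^sup>L q g = 1" and int: "integrable q (sfun a g)"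
  shows "Aa a powr a \<le> integral\<^sup>L q (sfun a g)"
proof -
  define A where "A = Aa a"
  have A0: "0 < A" using Aa_pos a by (simp add: A_def)
  define R where "R y = A powr a * (a * Mf a y / A + (1 - a) * g y)" for y
  have Rint: "integrable q R" unfolding R_def using Mf_int[of a] a g
    by (auto intro!: integrable_mult_right integrable_add integrable_divide)
  have le: "AE y in q. R y \<le> sfun a g y"
    using g(2) proof eventually_elim
    case (elim y)
    show ?case unfolding R_def sfun_Mf[of a]
      using a by (subst sfun_Mf) (use a in simp, rule young_gt1, use elim a A0 in \<open>auto simp: Mf_nonneg\<close>)
  qed
  have "A powr a = integral\<^sup>L q R"
    unfolding R_def using Mf_int[of a] a g A0 by (simp add: Bochner_Integration.integral_add integrable_divide A_def[symmetric] Aa_def[symmetric])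
  also have "\<dots> \<le> integral\<^sup>L q (sfun a g)" by (rule integral_mono_AE[OF Rint int le])
  finally show ?thesis by (simp add: A_def)
qed


definition "gfun b y = Mf b y / Aa b"

lemma gfun_meas[measurable]: "gfun b \<in> borel_measurable q"
  unfolding gfun_def by measurable

lemma gfun_props: assumes b: "0 < b"
  shows "integrable q (gfun b)" "integral\<^sup>L q (gfun b) = 1" "AE y in q. 0 < gfun b y"
    "AE y in q. sfun b (gfun b) y = Aa b powr (b - 1) * Mf b y"
    "integrable q (sfun b (gfun b))" "integral\<^sup>L q (sfun b (gfun b)) = Aa b powr b"
proof -
  have A0: "0 < Aa b" by (rule Aa_pos[OF b])
  show gi: "integrable q (gfun b)" unfolding gfun_def using Mf_int[OF b] by (rule integrable_divide)
  show "integral\<^sup>L q (gfun b) = 1" unfolding gfun_def using A0 by (simp add: Aa_def[symmetric])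
  have Mp: "AE y in q. 0 < Mf b y"
    using Mf_bounds[OF b] proof eventually_elim
    case (elim y) then show ?case using wmin_pos by (smt (verit) powr_gt_zero)
  qed
  then show "AE y in q. 0 < gfun b y" by eventually_elim (use A0 in \<open>simp add: gfun_def\<close>)
  show se: "AE y in q. sfun b (gfun b) y = Aa b powr (b - 1) * Mf b y"
    using Mp proof eventually_elim
    case (elim y)
    show ?case unfolding sfun_Mf[OF b] gfun_def by (rule pow_ident3) (use elim A0 in auto)
  qed
  have ri: "integrable q (\<lambda>y. Aa b powr (b - 1) * Mf b y)" using Mf_int[OF b] by (rule integrable_mult_right)
  show "integrable q (sfun b (gfun b))"
    using integrable_cong_AE[OF sfun_meas[OF gfun_meas] _ se] ri by simp
  have "integral\<^sup>L q (sfun b (gfun b)) = integral\<^sup>L q (\<lambda>y. Aa b powr (b - 1) * Mf b y)"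
    by (rule integral_cong_AE) (use se in auto)
  also have "\<dots> = Aa b powr (b - 1) * Aa b" by (simp add: Aa_def)
  also have "\<dots> = Aa b powr b" using A0 by (simp add: powr_diff)
  finally show "integral\<^sup>L q (sfun b (gfun b)) = Aa b powr b" .
qed

lemma J_sum_lt: assumes "0 < c" "0 < (a - 1) / (b - 1)" "(a - 1) / (b - 1) < 1" "b \<noteq> 1"
  shows "AE y in q. \<forall>g::'y\<Rightarrow>real. 0 < g y \<longrightarrow> sfun a g y \<le> c powr ((a - 1) / (b - 1)) * (((a - 1) / (b - 1)) * sfun b g y / c + (1 - (a - 1) / (b - 1)))"
  using good proof eventually_elim
  case (elim y)
  define t where "t = (a - 1) / (b - 1)"
  show ?case
  proof (intro allI impI)
    fix g :: "'y \<Rightarrow> real" assume g: "0 < g y"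
    have "sfun a g y \<le> (\<Sum>x\<in>set_pmf p. pmf p x * (c powr t * (t * (f x y powr b * g y powr (1 - b)) / c + (1 - t) * f x y)))"
      unfolding sfun_def t_def using assms g
      by (intro sum_mono mult_left_mono J_lt) (auto simp: f_nonneg)
    also have "\<dots> = (\<Sum>x\<in>set_pmf p. (c powr t * t / c) * (pmf p x * (f x y powr b * g y powr (1 - b))) + (c powr t * (1 - t)) * (pmf p x * f x y))"
      by (intro sum.cong) (auto simp: algebra_simps)
    also have "\<dots> = (c powr t * t / c) * sfun b g y + (c powr t * (1 - t)) * (\<Sum>x\<in>set_pmf p. pmf p x * f x y)"
      unfolding sfun_def by (simp add: sum.distrib sum_distrib_left)
    also have "\<dots> = c powr t * (t * sfun b g y / c + (1 - t))" using elim by (simp add: algebra_simps)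
    finally show "sfun a g y \<le> c powr ((a - 1) / (b - 1)) * (((a - 1) / (b - 1)) * sfun b g y / c + (1 - (a - 1) / (b - 1)))"
      by (simp add: t_def)
  qed
qed

lemma J_sum_gt: assumes "0 < c" "1 < (a - 1) / (b - 1)" "b \<noteq> 1"
  shows "AE y in q. \<forall>g::'y\<Rightarrow>real. 0 < g y \<longrightarrow> c powr ((a - 1) / (b - 1)) * (((a - 1) / (b - 1)) * sfun b g y / c + (1 - (a - 1) / (b - 1))) \<le> sfun a g y"
  using good proof eventually_elim
  case (elim y)
  define t where "t = (a - 1) / (b - 1)"
  show ?case
  proof (intro allI impI)
    fix g :: "'y \<Rightarrow> real" assume g: "0 < g y"
    have "c powr t * (t * sfun b g y / c + (1 - t)) = (c powr t * t / c) * sfun b g y + (c powr t * (1 - t)) * (\<Sum>x\<in>set_pmf p. pmf p x * f x y)"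
      using elim by (simp add: algebra_simps)
    also have "\<dots> = (\<Sum>x\<in>set_pmf p. (c powr t * t / c) * (pmf p x * (f x y powr b * g y powr (1 - b))) + (c powr t * (1 - t)) * (pmf p x * f x y))"
      unfolding sfun_def by (simp add: sum.distrib sum_distrib_left)
    also have "\<dots> = (\<Sum>x\<in>set_pmf p. pmf p x * (c powr t * (t * (f x y powr b * g y powr (1 - b)) / c + (1 - t) * f x y)))"
      by (intro sum.cong) (auto simp: algebra_simps)
    also have "\<dots> \<le> sfun a g y"
      unfolding sfun_def t_def using assms g
      by (intro sum_mono mult_left_mono J_gt) (auto simp: f_nonneg)
    finally show "c powr ((a - 1) / (b - 1)) * (((a - 1) / (b - 1)) * sfun b g y / c + (1 - (a - 1) / (b - 1))) \<le> sfun a g y"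
      by (simp add: t_def)
  qed
qed


lemma lin_int: fixes h :: "'y \<Rightarrow> real" assumes h: "integrable q h"
  shows "integral\<^sup>L q (\<lambda>y. k * (t * h y / c + d)) = k * (t * integral\<^sup>L q h / c + d)"
proof -
  interpret q: prob_space q by (rule prob_q)
  have "integral\<^sup>L q (\<lambda>y. k * (t * h y / c + d)) = k * integral\<^sup>L q (\<lambda>y. t * h y / c + d)"
    using integral_mult_right_zero[of q k "\<lambda>y. t * h y / c + d"] by simp
  also have "integral\<^sup>L q (\<lambda>y. t * h y / c + d) = integral\<^sup>L q (\<lambda>y. t * h y / c) + integral\<^sup>L q (\<lambda>y. d)"
    by (rule Bochner_Integration.integral_add) (use h in \<open>auto intro!: integrable_divide integrable_mult_right\<close>)
  also have "integral\<^sup>L q (\<lambda>y. t * h y / c) = t * integral\<^sup>L q h / c" by simp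
  also have "integral\<^sup>L q (\<lambda>y. d) = d" by (simp add: q.prob_space)
  finally show ?thesis .
qed

lemma chainA: assumes ab: "0 < a" "a < b" "b < 1"
  shows "renyi_info a p W \<le> renyi_info b p W"
proof -
  have b0: "0 < b" using ab by simp
  define g where "g = gfun b"
  note gp = gfun_props[OF b0, folded g_def]
  define c where "c = Aa b powr b"
  have c0: "0 < c" using Aa_pos[OF b0] by (simp add: c_def)
  define t where "t = (a - 1) / (b - 1)"
  have t1: "1 < t" using ab by (simp add: t_def field_simps)
  have g0: "AE y in q. 0 \<le> g y" using gp(3) by eventually_elim simp
  have H: "integrable q (sfun a g)" "integral\<^sup>L q (sfun a g) \<le> Aa a powr a"
    using H_lt1[OF ab(1) _ _ g0 gp(1) gp(2)] ab by (auto simp: g_def)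
  have J: "AE y in q. c powr t * (t * sfun b g y / c + (1 - t)) \<le> sfun a g y"
    using J_sum_gt[OF c0 t1[unfolded t_def]] gp(3) ab by (auto elim!: AE_mp simp: t_def)
  have Lint: "integrable q (\<lambda>y. c powr t * (t * sfun b g y / c + (1 - t)))"
    using gp(5) by (auto intro!: integrable_mult_right integrable_add integrable_divide finite_measure.integrable_const prob_space.finite_measure prob_q)
  have "c powr t = integral\<^sup>L q (\<lambda>y. c powr t * (t * sfun b g y / c + (1 - t)))"
    by (subst lin_int[OF gp(5)]) (use c0 gp(6) in \<open>simp add: c_def\<close>)
  also have "\<dots> \<le> integral\<^sup>L q (sfun a g)" by (rule integral_mono_AE[OF Lint H(1) J])
  also have "\<dots> \<le> Aa a powr a" by (rule H(2))
  finally have "c powr t \<le> Aa a powr a" .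
  then have "ln (c powr t) \<le> ln (Aa a powr a)" using c0 Aa_pos[OF ab(1)] by (subst ln_le_cancel_iff) auto
  then have "t * ln c \<le> a * ln (Aa a)" using c0 Aa_pos[OF ab(1)] by (simp add: ln_powr)
  moreover have "ln c = b * ln (Aa b)" using Aa_pos[OF b0] by (simp add: c_def ln_powr)
  ultimately have "t * (b * ln (Aa b)) \<le> a * ln (Aa a)" by simp
  then have "a / (a - 1) * ln (Aa a) \<le> b / (b - 1) * ln (Aa b)"
    by (intro arith_neg) (use ab in \<open>auto simp: t_def algebra_simps\<close>)
  then show ?thesis using ab by (simp add: I_ne1)
qed

lemma chainB: assumes ab: "1 < a" "a < b"
  shows "renyi_info a p W \<le> renyi_info b p W"
proof -
  have b0: "0 < b" using ab by simp
  define g where "g = gfun b"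
  note gp = gfun_props[OF b0, folded g_def]
  define c where "c = Aa b powr b"
  have c0: "0 < c" using Aa_pos[OF b0] by (simp add: c_def)
  define t where "t = (a - 1) / (b - 1)"
  have t01: "0 < t" "t < 1" using ab by (auto simp: t_def field_simps)
  have J: "AE y in q. sfun a g y \<le> c powr t * (t * sfun b g y / c + (1 - t))"
    using J_sum_lt[OF c0 t01[unfolded t_def]] gp(3) ab by (auto elim!: AE_mp simp: t_def)
  have Lint: "integrable q (\<lambda>y. c powr t * (t * sfun b g y / c + (1 - t)))"
    using gp(5) by (auto intro!: integrable_mult_right integrable_add integrable_divide finite_measure.integrable_const prob_space.finite_measure prob_q)
  have Sint: "integrable q (sfun a g)"
    by (rule Bochner_Integration.integrable_bound[OF Lint]) (use J sfun_meas[OF gfun_meas, of a b] in \<open>auto elim!: AE_mp simp: sfun_nonneg g_def\<close>)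
  have "Aa a powr a \<le> integral\<^sup>L q (sfun a g)"
    by (rule H_gt1) (use ab gp Sint in \<open>auto simp: g_def\<close>)
  also have "\<dots> \<le> integral\<^sup>L q (\<lambda>y. c powr t * (t * sfun b g y / c + (1 - t)))"
    by (rule integral_mono_AE[OF Sint Lint J])
  also have "\<dots> = c powr t"
    by (subst lin_int[OF gp(5)]) (use c0 gp(6) in \<open>simp add: c_def\<close>)
  finally have "Aa a powr a \<le> c powr t" .
  then have "ln (Aa a powr a) \<le> ln (c powr t)" using c0 Aa_pos[of a] ab by (subst ln_le_cancel_iff) auto
  then have "a * ln (Aa a) \<le> t * ln c" using c0 Aa_pos[of a] ab by (simp add: ln_powr)
  moreover have "ln c = b * ln (Aa b)" using Aa_pos[OF b0] by (simp add: c_def ln_powr)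
  ultimately have "a * ln (Aa a) \<le> t * (b * ln (Aa b))" by simp
  then have "a / (a - 1) * ln (Aa a) \<le> b / (b - 1) * ln (Aa b)"
    by (intro arith_pos) (use ab in \<open>auto simp: t_def algebra_simps\<close>)
  then show ?thesis using ab by (simp add: I_ne1)
qed


lemma lin2: fixes u v :: "'y \<Rightarrow> real" assumes "integrable q u" "integrable q v"
  shows "integral\<^sup>L q (\<lambda>y. k1 * u y + k2 * v y + d) = k1 * integral\<^sup>L q u + k2 * integral\<^sup>L q v + d"
proof -
  interpret q: prob_space q by (rule prob_q)
  have "integral\<^sup>L q (\<lambda>y. k1 * u y + k2 * v y + d) = integral\<^sup>L q (\<lambda>y. k1 * u y + k2 * v y) + integral\<^sup>L q (\<lambda>y. d)"
    by (rule Bochner_Integration.integral_add) (use assms in auto)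
  also have "integral\<^sup>L q (\<lambda>y. k1 * u y + k2 * v y) = integral\<^sup>L q (\<lambda>y. k1 * u y) + integral\<^sup>L q (\<lambda>y. k2 * v y)"
    by (rule Bochner_Integration.integral_add) (use assms in auto)
  finally show ?thesis by (simp add: q.prob_space)
qed

lemma I1_int: "integrable q (\<lambda>y. \<Sum>x\<in>set_pmf p. pmf p x * (f x y * ln (f x y)))"
  by (auto intro!: flnf_int integrable_mult_right)

lemma chainC: assumes a: "0 < a" "a < 1"
  shows "renyi_info a p W \<le> renyi_info 1 p W"
proof -
  interpret q: prob_space q by (rule prob_q)
  define g1 where "g1 = (\<lambda>y::'y. 1::real)"
  have H: "integrable q (sfun a g1)" "integral\<^sup>L q (sfun a g1) \<le> Aa a powr a"
    using H_lt1[OF a, of g1] by (auto simp: g1_def q.prob_space)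
  define c where "c = integral\<^sup>L q (sfun a g1)"
  have "wmin \<le> c"
  proof -
    have "AE y in q. wmin \<le> sfun a g1 y"
      using Mf_bounds[OF a(1)] proof eventually_elim
      case (elim y)
      have "wmin = (wmin powr (1/a)) powr a" using wmin_pos a by (simp add: powr_powr)
      also have "\<dots> \<le> Mf a y powr a" using elim a wmin_pos by (intro powr_mono2) auto
      finally show ?case by (simp add: sfun_Mf[OF a(1)] g1_def)
    qed
    then have "integral\<^sup>L q (\<lambda>_. wmin) \<le> c" unfolding c_def
      by (intro integral_mono_AE H(1)) auto
    then show ?thesis by (simp add: q.prob_space)
  qed
  then have c0: "0 < c" using wmin_pos by simp
  have K: "AE y in q. (a - 1) * (\<Sum>x\<in>set_pmf p. pmf p x * (f x y * ln (f x y))) \<le> (1 / c) * sfun a g1 y + 0 * g1 y + (ln c - 1)"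
    using good proof eventually_elim
    case (elim y)
    have "(a - 1) * (\<Sum>x\<in>set_pmf p. pmf p x * (f x y * ln (f x y))) = (\<Sum>x\<in>set_pmf p. pmf p x * ((a - 1) * (f x y * ln (f x y))))"
      by (simp add: sum_distrib_left algebra_simps)
    also have "\<dots> \<le> (\<Sum>x\<in>set_pmf p. pmf p x * (f x y powr a / c - f x y + f x y * ln c))"
      using c0 by (intro sum_mono mult_left_mono K1) (auto simp: f_nonneg)
    also have "\<dots> = (1 / c) * (\<Sum>x\<in>set_pmf p. pmf p x * f x y powr a) + (ln c - 1) * (\<Sum>x\<in>set_pmf p. pmf p x * f x y)"
      by (simp add: sum_distrib_left sum_subtractf sum.distrib algebra_simps)
    also have "\<dots> = (1 / c) * sfun a g1 y + 0 * g1 y + (ln c - 1)"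
      using elim by (simp add: sfun_def g1_def)
    finally show ?case .
  qed
  have "(a - 1) * I1 = integral\<^sup>L q (\<lambda>y. (a - 1) * (\<Sum>x\<in>set_pmf p. pmf p x * (f x y * ln (f x y))))"
    unfolding I1_def by simp
  also have "\<dots> \<le> integral\<^sup>L q (\<lambda>y. (1 / c) * sfun a g1 y + 0 * g1 y + (ln c - 1))"
    by (rule integral_mono_AE[OF _ _ K]) (use H I1_int in \<open>auto simp: g1_def\<close>)
  also have "\<dots> = ln c" using c0 by (subst lin2[OF H(1)]) (simp_all add: c_def[symmetric], simp add: g1_def)

  also have "\<dots> \<le> ln (Aa a powr a)" using c0 H(2) by (subst ln_le_cancel_iff) (auto simp: c_def)
  also have "\<dots> = a * ln (Aa a)" using Aa_pos[OF a(1)] by (simp add: ln_powr)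
  finally have le: "(a - 1) * I1 \<le> a * ln (Aa a)" .
  have "a / (a - 1) * ln (Aa a) - I1 = (a * ln (Aa a) - (a - 1) * I1) / (a - 1)"
    using a by (simp add: field_simps)
  also have "\<dots> \<le> 0" using a le by (intro divide_nonneg_neg) auto
  finally show ?thesis using a by (simp add: I_ne1 I_1)
qed

lemma chainD: assumes b: "1 < b"
  shows "renyi_info 1 p W \<le> renyi_info b p W"
proof -
  interpret q: prob_space q by (rule prob_q)
  have b0: "0 < b" using b by simp
  define g where "g = gfun b"
  note gp = gfun_props[OF b0, folded g_def]
  define c where "c = Aa b powr b"
  have c0: "0 < c" using Aa_pos[OF b0] by (simp add: c_def)
  have K: "AE y in q. (b - 1) * (\<Sum>x\<in>set_pmf p. pmf p x * (f x y * ln (f x y))) \<le> (1 / c) * sfun b g y + (b - 1) * g y + (ln c - 1 - (b - 1))"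
    using good gp(3) proof eventually_elim
    case (elim y)
    have "(b - 1) * (\<Sum>x\<in>set_pmf p. pmf p x * (f x y * ln (f x y))) = (\<Sum>x\<in>set_pmf p. pmf p x * ((b - 1) * (f x y * ln (f x y))))"
      by (simp add: sum_distrib_left algebra_simps)
    also have "\<dots> \<le> (\<Sum>x\<in>set_pmf p. pmf p x * (f x y powr b * g y powr (1 - b) / c - f x y + f x y * ln c + (b - 1) * (f x y * ln (g y))))"
      using c0 elim by (intro sum_mono mult_left_mono K2) (auto simp: f_nonneg)
    also have "\<dots> = (1 / c) * sfun b g y + (ln c - 1 + (b - 1) * ln (g y)) * (\<Sum>x\<in>set_pmf p. pmf p x * f x y)"
      unfolding sfun_def by (simp add: sum_distrib_left sum_subtractf sum.distrib algebra_simps)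
    also have "\<dots> = (1 / c) * sfun b g y + (ln c - 1 + (b - 1) * ln (g y))"
      using elim by simp
    also have "\<dots> \<le> (1 / c) * sfun b g y + (ln c - 1 + (b - 1) * (g y - 1))"
      using elim b by (auto intro!: mult_left_mono ln_le_minus_one)
    finally show ?case by (simp add: algebra_simps)
  qed
  have "(b - 1) * I1 = integral\<^sup>L q (\<lambda>y. (b - 1) * (\<Sum>x\<in>set_pmf p. pmf p x * (f x y * ln (f x y))))"
    unfolding I1_def by simp
  also have "\<dots> \<le> integral\<^sup>L q (\<lambda>y. (1 / c) * sfun b g y + (b - 1) * g y + (ln c - 1 - (b - 1)))"
    by (rule integral_mono_AE[OF _ _ K]) (use gp I1_int in \<open>auto\<close>)
  also have "\<dots> = ln c" by (subst lin2[OF gp(5) gp(1)]) (use c0 gp(2,6) in \<open>auto simp: c_def[symmetric]\<close>)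
  also have "\<dots> = b * ln (Aa b)" using Aa_pos[OF b0] by (simp add: ln_powr c_def)
  finally have le: "(b - 1) * I1 \<le> b * ln (Aa b)" .
  have "I1 - b / (b - 1) * ln (Aa b) = ((b - 1) * I1 - b * ln (Aa b)) / (b - 1)"
    using b by (simp add: field_simps)
  also have "\<dots> \<le> 0" using b le by (intro divide_nonpos_pos) auto
  finally show ?thesis using b by (simp add: I_ne1 I_1)
qed


lemma info_mono: assumes "0 < a" "a \<le> b" shows "renyi_info a p W \<le> renyi_info b p W"
proof (cases "a = b")
  case True then show ?thesis by simp
next
  case False
  then have ab: "a < b" using assms by simp
  consider "b < 1" | "1 < a" | "a < 1" "b = 1" | "a = 1" "1 < b" | "a < 1" "1 < b"
    using ab by linarith
  then show ?thesis
  proof cases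
    case 1 then show ?thesis using chainA[of a b] ab assms by simp
  next
    case 2 then show ?thesis using chainB[of a b] ab by simp
  next
    case 3 then show ?thesis using chainC[of a] assms by simp
  next
    case 4 then show ?thesis using chainD[of b] by simp
  next
    case 5 then show ?thesis using chainC[of a] chainD[of b] assms by linarith
  qed
qed

lemma Mf_mono: assumes "0 < a" "a < b" shows "AE y in q. Mf a y \<le> Mf b y"
  unfolding Mf_def using assms
  by (intro AE_I2 power_mean_mono) (auto simp: finP sumw f_nonneg)

lemma Aa_mono: assumes "0 < a" "a < b" shows "Aa a \<le> Aa b"
  unfolding Aa_def using assms Mf_int[of a] Mf_int[of b] by (intro integral_mono_AE Mf_mono) auto

lemma Aa_1: "Aa 1 = 1"
proof -
  interpret q: prob_space q by (rule prob_q)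
  have "integral\<^sup>L q (Mf 1) = integral\<^sup>L q (\<lambda>_. 1)"
    by (rule integral_cong_AE) (use sum1 in \<open>auto simp: Mf_def f_nonneg elim!: AE_mp\<close>)
  then show ?thesis by (simp add: Aa_def q.prob_space)
qed

lemma info_scaled: assumes "0 < a" "a < b" "b < 1"
  shows "(1 - b) / b * renyi_info b p W \<le> (1 - a) / a * renyi_info a p W"
proof -
  have e: "(1 - c) / c * renyi_info c p W = - ln (Aa c)" if "0 < c" "c < 1" for c
    using that by (simp add: I_ne1 field_simps)
  have "ln (Aa a) \<le> ln (Aa b)" using Aa_mono[of a b] Aa_pos[of a] Aa_pos[of b] assms
    by (subst ln_le_cancel_iff) auto
  then show ?thesis using e[of a] e[of b] assms by simp
qed

lemma info_nonneg: assumes "0 < a" "a < 1" shows "0 \<le> renyi_info a p W"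
proof -
  have "Aa a \<le> 1" using Aa_mono[of a 1] assms Aa_1 by simp
  then have "ln (Aa a) \<le> 0" using Aa_pos[of a] assms by simp
  moreover have "a / (a - 1) < 0" using assms by (simp add: divide_pos_neg)
  ultimately show ?thesis using assms by (simp add: I_ne1, intro divide_nonpos_neg mult_nonneg_nonpos) auto
qed

end



lemma em_mono: "0 \<le> k \<Longrightarrow> (x::ereal) \<le> y \<Longrightarrow> ereal k * x \<le> ereal k * y"
  by (rule ereal_mult_left_mono) auto

lemma em_anti: "k \<le> 0 \<Longrightarrow> (x::ereal) \<le> y \<Longrightarrow> ereal k * y \<le> ereal k * x"
  by (cases x; cases y; cases "k = 0") (auto simp: mult_left_mono_neg)

lemma em_nonpos1: "k \<le> 0 \<Longrightarrow> 0 \<le> (x::ereal) \<Longrightarrow> ereal k * x \<le> 0"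
  using em_anti[of k 0 x] by simp

lemma em_nonpos2: "0 \<le> k \<Longrightarrow> (x::ereal) \<le> 0 \<Longrightarrow> ereal k * x \<le> 0"
  using em_mono[of k x 0] by simp

locale capfun =
  fixes C :: "real \<Rightarrow> ereal"
  assumes Cmono: "\<And>a b. 0 < a \<Longrightarrow> a \<le> b \<Longrightarrow> C a \<le> C b"
    and Cnn: "\<And>a. 0 < a \<Longrightarrow> 0 \<le> C a"
    and Chalf: "\<And>a b. 0 < a \<Longrightarrow> a < b \<Longrightarrow> b < 1 \<Longrightarrow> C b \<le> ereal (((1 - a) / a) / ((1 - b) / b)) * C a"
begin

definition "T a R = ereal ((1 - a) / a) * (C a - ereal R)"
definition "E R = (SUP a\<in>{0<..}. T a R)"
definition "ci = (INF a\<in>{0<..}. C a)"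

lemma T1: "T 1 R = 0" by (simp add: T_def)

lemma E_ge: "0 < a \<Longrightarrow> T a R \<le> E R"
  unfolding E_def by (rule SUP_upper) auto

lemma E_nn: "0 \<le> E R" using E_ge[of 1 R] T1 by simp

lemma T_le0_lt1: "0 < a \<Longrightarrow> a \<le> 1 \<Longrightarrow> C a \<le> ereal R \<Longrightarrow> T a R \<le> 0"
  unfolding T_def by (rule em_nonpos2) (auto simp: ereal_minus_le_iff)

lemma T_le0_ge1: "1 \<le> a \<Longrightarrow> ereal R \<le> C a \<Longrightarrow> T a R \<le> 0"
  unfolding T_def by (rule em_nonpos1) (auto simp: divide_nonpos_pos ereal_le_minus_iff)

lemma T_anti_lt1: "0 < a \<Longrightarrow> a \<le> 1 \<Longrightarrow> R1 \<le> R2 \<Longrightarrow> T a R2 \<le> T a R1"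
  unfolding T_def by (rule em_mono) (auto intro!: ereal_minus_mono)

lemma T_mono_ge1: "1 \<le> a \<Longrightarrow> R1 \<le> R2 \<Longrightarrow> T a R1 \<le> T a R2"
  unfolding T_def by (rule em_anti) (auto intro!: ereal_minus_mono divide_nonpos_pos)

lemma C_ge_ci: "0 < a \<Longrightarrow> ci \<le> C a"
  unfolding ci_def by (rule INF_lower) auto

lemma ci_nn: "0 \<le> ci"
  unfolding ci_def by (rule INF_greatest) (auto intro: Cnn)


lemma Lim_ci: "Lim (at_right 0) C = ci"
proof (rule tendsto_Lim)
  show "at_right (0::real) \<noteq> bot" by simp
  show "(C \<longlongrightarrow> ci) (at_right 0)"
  proof (rule order_tendstoI)
    fix y assume "y < ci"
    then show "eventually (\<lambda>x. y < C x) (at_right 0)"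
      unfolding eventually_at_right[OF zero_less_one]
      using C_ge_ci by (intro exI[of _ 1]) (auto intro: less_le_trans)
  next
    fix y assume "ci < y"
    then obtain a where a: "0 < a" "C a < y" unfolding ci_def by (auto simp: INF_less_iff)
    then show "eventually (\<lambda>x. C x < y) (at_right 0)"
      unfolding eventually_at_right[OF a(1)]
    proof (intro exI[of _ a] conjI allI impI)
      fix x assume x: "0 < x" "x < a"
      then have "C x \<le> C a" by (intro Cmono) auto
      then show "C x < y" using a(2) by (rule le_less_trans)
    qed (use a in auto)
  qed
qed

lemma T_mix: assumes a: "0 < a" and l: "0 < l" "l < 1"
  shows "T a (l * R1 + (1 - l) * R2) = ereal l * T a R1 + ereal (1 - l) * T a R2"
proof -
  define k where "k = (1 - a) / a"
  have "C a \<noteq> - \<infinity>" using Cnn[OF a] by auto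
  then consider "C a = \<infinity>" | v where "C a = ereal v" by (cases "C a") auto
  then show ?thesis
  proof cases
    case 1
    then show ?thesis unfolding T_def k_def[symmetric] using l
      by (cases "k = 0"; cases "k < 0") (auto simp: mult_neg_pos)
  next
    case 2
    then show ?thesis unfolding T_def k_def[symmetric] by (simp add: algebra_simps)
  qed
qed

lemma E_convex: assumes l: "0 < l" "l < 1"
  shows "E (l * R1 + (1 - l) * R2) \<le> ereal l * E R1 + ereal (1 - l) * E R2"
  unfolding E_def[of "l * R1 + (1 - l) * R2"]
proof (rule SUP_least)
  fix a :: real assume "a \<in> {0<..}"
  then have a: "0 < a" by simp
  have "T a (l * R1 + (1 - l) * R2) = ereal l * T a R1 + ereal (1 - l) * T a R2" by (rule T_mix[OF a l])
  also have "\<dots> \<le> ereal l * E R1 + ereal (1 - l) * E R2"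
    using l by (intro add_mono em_mono E_ge a) auto
  finally show "T a (l * R1 + (1 - l) * R2) \<le> ereal l * E R1 + ereal (1 - l) * E R2" .
qed

lemma E_fin: assumes "ci < ereal R" "0 \<le> R" shows "E R < \<infinity>"
proof -
  obtain a0 where a0: "0 < a0" "C a0 < ereal R" using assms(1) unfolding ci_def by (auto simp: INF_less_iff)
  define a1 where "a1 = min a0 (1/2)"
  have a1: "0 < a1" "a1 < 1" "a1 \<le> a0" using a0 by (auto simp: a1_def)
  have "C a1 < ereal R" using Cmono[OF a1(1) a1(3)] a0 by simp
  moreover have "0 \<le> C a1" using Cnn[OF a1(1)] .
  ultimately obtain v1 where v1: "C a1 = ereal v1" "0 \<le> v1" "v1 < R" by (cases "C a1") auto
  define k1 where "k1 = (1 - a1) / a1"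
  have k1: "0 < k1" using a1 by (simp add: k1_def)
  define B where "B = max R (k1 * v1)"
  have "E R \<le> ereal B" unfolding E_def
  proof (rule SUP_least)
    fix a :: real assume "a \<in> {0<..}"
    then have a: "0 < a" by simp
    consider "a \<le> a1" | "a1 < a" "a < 1" | "1 \<le> a" by linarith
    then show "T a R \<le> ereal B"
    proof cases
      case 1
      have "C a \<le> ereal v1" using Cmono[OF a 1] v1 by simp
      also have "ereal v1 \<le> ereal R" using v1 by simp
      finally have "C a \<le> ereal R" .
      then have "T a R \<le> 0" using a a1 1 by (intro T_le0_lt1) auto
      also have "0 \<le> ereal B" using assms by (simp add: B_def le_max_iff_disj)
      finally show ?thesis .
    next
      case 2
      define ka where "ka = (1 - a) / a"
      have ka: "0 < ka" using 2 a by (simp add: ka_def)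
      have Ca: "C a \<le> ereal (k1 / ka * v1)"
        using Chalf[OF a1(1) 2] v1 by (simp add: k1_def ka_def)
      have "T a R = ereal ka * (C a - ereal R)" by (simp add: T_def ka_def)
      also have "\<dots> \<le> ereal ka * C a"
        using assms(2) ka ereal_minus_mono[of "C a" "C a" 0 "ereal R"] by (intro em_mono) auto
      also have "\<dots> \<le> ereal ka * ereal (k1 / ka * v1)" using ka Ca by (intro em_mono) auto
      also have "\<dots> = ereal (k1 * v1)" using ka by simp
      also have "\<dots> \<le> ereal B" by (simp add: B_def)
      finally show ?thesis .
    next
      case 3
      define k where "k = (1 - a) / a"
      have k: "k \<le> 0" "-1 \<le> k" using 3 by (auto simp: k_def field_simps)
      have "T a R = ereal k * (C a - ereal R)" by (simp add: T_def k_def)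
      also have "\<dots> \<le> ereal k * ereal (- R)"
        using k Cnn[OF a] ereal_minus_mono[of 0 "C a" "ereal R" "ereal R"] by (intro em_anti) auto
      also have "\<dots> \<le> ereal B"
      proof -
        have "(- k) * R \<le> R" using k assms(2) by (intro mult_left_le_one_le) auto
        then have "k * (- R) \<le> B" by (simp add: B_def le_max_iff_disj)
        then show ?thesis by simp
      qed
      finally show ?thesis .
    qed
  qed
  then show ?thesis by (auto simp: le_less_trans)
qed

lemma E_anti: assumes "R1 \<le> R2" "ereal R2 \<le> C 1" shows "E R2 \<le> E R1"
  unfolding E_def[of R2]
proof (rule SUP_least)
  fix a :: real assume "a \<in> {0<..}"
  then have a: "0 < a" by simp
  show "T a R2 \<le> E R1"
  proof (cases "a \<le> 1")
    case True
    then show ?thesis using T_anti_lt1[OF a True assms(1)] E_ge[OF a, of R1] by simp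
  next
    case False
    have "T a R2 \<le> 0" using False assms(2) Cmono[of 1 a] by (intro T_le0_ge1) auto
    then show ?thesis using E_nn[of R1] by simp
  qed
qed

lemma E_mono: assumes "C 1 \<le> ereal R1" "R1 \<le> R2" shows "E R1 \<le> E R2"
  unfolding E_def[of R1]
proof (rule SUP_least)
  fix a :: real assume "a \<in> {0<..}"
  then have a: "0 < a" by simp
  show "T a R1 \<le> E R2"
  proof (cases "a < 1")
    case True
    have "T a R1 \<le> 0" using True assms(1) Cmono[of a 1] a by (intro T_le0_lt1) auto
    then show ?thesis using E_nn[of R2] by simp
  next
    case False
    then show ?thesis using T_mono_ge1[of a R1 R2] assms E_ge[OF a, of R2] by simp
  qed
qed


lemma E_inf: assumes "ereal R < ci" shows "E R = \<infinity>"
proof (cases ci)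
  case PInf
  then have "C (1/2) = \<infinity>" using C_ge_ci[of "1/2"] by simp
  then have "T (1/2) R = \<infinity>" by (simp add: T_def)
  then show ?thesis using E_ge[of "1/2" R] by simp
next
  case (real c)
  then have cR: "R < c" using assms by simp
  define d where "d = c - R"
  have d: "0 < d" using cR by (simp add: d_def)
  show ?thesis
  proof (rule ereal_top)
    fix B
    define N where "N = max 0 (B / d)"
    have N: "0 \<le> N" "B \<le> N * d" using d by (auto simp: N_def field_simps max_def)
    define a where "a = 1 / (N + 2)"
    have a: "0 < a" "a < 1" using N by (auto simp: a_def)
    have ka: "(1 - a) / a = N + 1" using N by (simp add: a_def field_simps)
    have "ereal B \<le> ereal ((N + 1) * d)" using N d by (simp add: algebra_simps)
    also have "\<dots> = ereal (N + 1) * (ereal c - ereal R)" by (simp add: d_def)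
    also have "\<dots> \<le> ereal (N + 1) * (C a - ereal R)"
      using C_ge_ci[OF a(1)] real N by (intro em_mono ereal_minus_mono) auto
    also have "\<dots> = T a R" by (simp add: T_def ka)
    also have "\<dots> \<le> E R" by (rule E_ge[OF a(1)])
    finally show "ereal B \<le> E R" .
  qed
next
  case MInf then show ?thesis using ci_nn by simp
qed

lemma T_self: "T a R = 0" if "C a = ereal R" using that by (simp add: T_def)

lemma E_at_ci: assumes "ereal R = ci" shows "E R = (SUP a\<in>{0<..<1}. T a R)"
proof (rule antisym)
  have "ereal R - ereal R \<le> C (1/2) - ereal R"
    using C_ge_ci[of "1/2"] assms by (intro ereal_minus_mono) auto
  then have "0 \<le> C (1/2) - ereal R" by simp
  then have h: "0 \<le> T (1/2) R" unfolding T_def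
    using em_mono[of 1 0 "C (1/2) - ereal R"] by simp
  have z: "0 \<le> (SUP a\<in>{0<..<1}. T a R)"
    using h by (rule order_trans) (rule SUP_upper, auto)
  show "E R \<le> (SUP a\<in>{0<..<1}. T a R)" unfolding E_def
  proof (rule SUP_least)
    fix a :: real assume "a \<in> {0<..}"
    then have a: "0 < a" by simp
    show "T a R \<le> (SUP a\<in>{0<..<1}. T a R)"
    proof (cases "a < 1")
      case True then show ?thesis using a by (intro SUP_upper) auto
    next
      case False
      then have "T a R \<le> 0" using C_ge_ci[OF a] assms by (intro T_le0_ge1) auto
      then show ?thesis using z by simp
    qed
  qed
  show "(SUP a\<in>{0<..<1}. T a R) \<le> E R" unfolding E_def by (rule SUP_subset_mono) auto
qed

lemma E_at_phi_lt1: assumes "0 < p" "p < 1" "ereal R = C p" shows "E R = (SUP a\<in>{p..<1}. T a R)"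
proof (rule antisym)
  have z: "0 \<le> (SUP a\<in>{p..<1}. T a R)"
    using T_self[of p R] assms by (intro order_trans[OF _ SUP_upper[of p]]) auto
  show "E R \<le> (SUP a\<in>{p..<1}. T a R)" unfolding E_def
  proof (rule SUP_least)
    fix a :: real assume "a \<in> {0<..}"
    then have a: "0 < a" by simp
    consider "a < p" | "p \<le> a" "a < 1" | "1 \<le> a" by linarith
    then show "T a R \<le> (SUP a\<in>{p..<1}. T a R)"
    proof cases
      case 1
      then have "T a R \<le> 0" using Cmono[of a p] a assms by (intro T_le0_lt1) auto
      then show ?thesis using z by simp
    next
      case 2 then show ?thesis by (intro SUP_upper) auto
    next
      case 3
      then have "T a R \<le> 0" using Cmono[of p a] assms by (intro T_le0_ge1) auto
      then show ?thesis using z by simp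
    qed
  qed
  show "(SUP a\<in>{p..<1}. T a R) \<le> E R" unfolding E_def using assms by (intro SUP_subset_mono) auto
qed

lemma E_at_phi_ge1: assumes "1 \<le> p" "ereal R = C p" shows "E R = (SUP a\<in>{1..p}. T a R)"
proof (rule antisym)
  have z: "0 \<le> (SUP a\<in>{1..p}. T a R)"
    using T1[of R] assms by (intro order_trans[OF _ SUP_upper[of 1]]) auto
  show "E R \<le> (SUP a\<in>{1..p}. T a R)" unfolding E_def
  proof (rule SUP_least)
    fix a :: real assume "a \<in> {0<..}"
    then have a: "0 < a" by simp
    consider "a < 1" | "1 \<le> a" "a \<le> p" | "p < a" by linarith
    then show "T a R \<le> (SUP a\<in>{1..p}. T a R)"
    proof cases
      case 1
      then have "T a R \<le> 0" using Cmono[of a p] a assms by (intro T_le0_lt1) auto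
      then show ?thesis using z by simp
    next
      case 2 then show ?thesis by (intro SUP_upper) auto
    next
      case 3
      then have "T a R \<le> 0" using Cmono[of p a] assms by (intro T_le0_ge1) auto
      then show ?thesis using z by simp
    qed
  qed
  show "(SUP a\<in>{1..p}. T a R) \<le> E R" unfolding E_def using assms by (intro SUP_subset_mono) auto
qed

definition "chi = Sup {ereal a | a. 0 < a \<and> C a < \<infinity>}"
definition "Cext x = (if x = \<infinity> then (SUP a\<in>{0<..}. C a) else C (real_of_ereal x))"

lemma C_inf_above: assumes "0 < a" "chi < ereal a" shows "C a = \<infinity>"
proof (rule ccontr)
  assume "C a \<noteq> \<infinity>"
  then have "ereal a \<le> chi" unfolding chi_def using assms by (intro Sup_upper) (auto simp: less_top)
  then show False using assms by simp
qed

lemma T_inf_gt1: assumes "1 < a" "C a = \<infinity>" shows "T a R = - \<infinity>"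
proof -
  have "(1 - a) / a < 0" using assms by (intro divide_neg_pos) auto
  then show ?thesis using assms by (simp add: T_def)
qed

lemma E_chi1: assumes "Cext chi \<le> ereal R" "chi = 1" shows "E R = 0"
proof (rule antisym)
  show "E R \<le> 0" unfolding E_def
  proof (rule SUP_least)
    fix a :: real assume "a \<in> {0<..}"
    then have a: "0 < a" by simp
    consider "a \<le> 1" | "1 < a" by linarith
    then show "T a R \<le> 0"
    proof cases
      case 1
      have "C 1 \<le> ereal R" using assms by (simp add: Cext_def)
      then show ?thesis using Cmono[OF a 1] a 1 by (intro T_le0_lt1) auto
    next
      case 2
      have "C a = \<infinity>" using assms 2 by (intro C_inf_above) auto
      then show ?thesis using T_inf_gt1[OF 2] by simp
    qed
  qed
  show "0 \<le> E R" by (rule E_nn)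
qed


lemma E_chi_gt1: assumes R: "Cext chi \<le> ereal R" and chi: "1 < chi"
  shows "E R = (SUP a\<in>{a. 1 \<le> a \<and> ereal a < chi}. T a R)"
proof (rule antisym)
  define S where "S = {a. 1 \<le> a \<and> ereal a < chi}"
  have 1: "1 \<in> S" using chi by (simp add: S_def one_ereal_def)
  have z: "0 \<le> (SUP a\<in>S. T a R)"
    using T1[of R] by (intro order_trans[OF _ SUP_upper[OF 1]]) auto
  show "E R \<le> (SUP a\<in>{a. 1 \<le> a \<and> ereal a < chi}. T a R)" unfolding E_def S_def[symmetric]
  proof (rule SUP_least)
    fix a :: real assume "a \<in> {0<..}"
    then have a: "0 < a" by simp
    consider "a < 1" | "a \<in> S" | "1 \<le> a" "a \<notin> S" by linarith
    then show "T a R \<le> (SUP a\<in>S. T a R)"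
    proof cases
      case 1
      have "C a \<le> Cext chi"
      proof (cases "chi = \<infinity>")
        case True then show ?thesis using a by (simp add: Cext_def SUP_upper)
      next
        case False
        then obtain x where x: "chi = ereal x" using chi by (cases chi) auto
        then have "C a \<le> C x" using chi 1 a by (intro Cmono) auto
        then show ?thesis using x by (simp add: Cext_def)
      qed
      then have "C a \<le> ereal R" using R by simp
      then have "T a R \<le> 0" using a 1 by (intro T_le0_lt1) auto
      then show ?thesis using z by simp
    next
      case 2 then show ?thesis by (rule SUP_upper)
    next
      case 3
      then have chia: "chi \<le> ereal a" by (auto simp: S_def not_less)
      then obtain x where x: "chi = ereal x" using chi by (cases chi) auto
      have x1: "1 < x" using chi x by simp
      have xa: "x \<le> a" using chia x by simp
      show ?thesis
      proof (cases "x < a")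
        case True
        then have "C a = \<infinity>" using a x by (intro C_inf_above) auto
        then show ?thesis using T_inf_gt1[of a R] x1 True by simp
      next
        case False
        then have ax: "a = x" using xa by simp
        have "C x \<le> ereal R" using R x by (simp add: Cext_def)
        moreover have "0 \<le> C x" using Cnn x1 by simp
        ultimately obtain v where v: "C x = ereal v" "v \<le> R" by (cases "C x") auto
        define d where "d = R - v"
        define g where "g b = ereal ((b - 1) / b * d)" for b
        have Tx: "T x R = g x" by (simp add: T_def v g_def d_def algebra_simps)
        have lim: "(g \<longlongrightarrow> g x) (at_left x)"
          unfolding g_def using x1
          by (intro tendsto_intros) (auto intro!: tendsto_eq_intros)
        have ev: "eventually (\<lambda>b. g b \<le> (SUP a\<in>S. T a R)) (at_left x)"
          unfolding eventually_at_left[OF x1]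
        proof (intro exI[of _ 1] conjI allI impI)
          fix b assume b: "1 < b" "b < x"
          then have bS: "b \<in> S" using x by (simp add: S_def)
          have "g b = ereal ((1 - b) / b) * (C x - ereal R)"
            by (simp add: g_def v d_def algebra_simps)
          also have "\<dots> \<le> T b R" unfolding T_def
            using b Cmono[of b x] by (intro em_anti ereal_minus_mono) (auto intro!: divide_nonpos_pos)
          also have "\<dots> \<le> (SUP a\<in>S. T a R)" by (rule SUP_upper[OF bS])
          finally show "g b \<le> (SUP a\<in>S. T a R)" .
        qed (use x1 in auto)
        have "g x \<le> (SUP a\<in>S. T a R)"
          by (rule tendsto_upperbound[OF lim ev]) simp
        then show ?thesis using Tx ax by simp
      qed
    qed
  qed
  show "(SUP a\<in>{a. 1 \<le> a \<and> ereal a < chi}. T a R) \<le> E R" unfolding E_def by (intro SUP_subset_mono) auto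
qed


lemma T_tendsto: assumes a: "0 < a" shows "((\<lambda>R. T a R) \<longlongrightarrow> T a c) (at_right c)"
proof -
  have "C a \<noteq> - \<infinity>" using Cnn[OF a] by auto
  then consider "C a = \<infinity>" | v where "C a = ereal v" by (cases "C a") auto
  then show ?thesis
  proof cases
    case 1 then show ?thesis by (simp add: T_def)
  next
    case 2
    then have "T a R = ereal ((1 - a) / a * (v - R))" for R by (simp add: T_def)
    then show ?thesis unfolding T_def[symmetric]
      by (simp only:) (intro tendsto_ereal tendsto_intros)
  qed
qed

lemma E_cont: "continuous_on (closure {R. ci < ereal R} \<inter> {0..}) E"
proof (cases ci)
  case PInf then show ?thesis by simp
next
  case MInf then show ?thesis using ci_nn by simp
next
  case (real c)
  have c0: "0 \<le> c" using ci_nn real by simp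
  have S: "closure {R. ci < ereal R} \<inter> {0..} = {c..}"
  proof -
    have "{R. ci < ereal R} = {c<..}" using real by auto
    then have "closure {R. ci < ereal R} = {c..}" by (simp add: closure_greaterThan)
    then show ?thesis using c0 by auto
  qed
  define e where "e R = real_of_ereal (E R)" for R
  have fin: "E R = ereal (e R)" if "c < R" for R
  proof -
    have "E R < \<infinity>" using that real c0 by (intro E_fin) auto
    then show ?thesis using E_nn[of R] by (cases "E R") (auto simp: e_def)
  qed
  have cvx: "convex_on {c<..} e"
    unfolding convex_on_def
  proof (intro conjI ballI allI impI)
    show "convex {c<..}" by simp
    fix x y u v :: real assume xy: "x \<in> {c<..}" "y \<in> {c<..}" and uv: "0 \<le> u" "0 \<le> v" "u + v = 1"
    show "e (u *\<^sub>R x + v *\<^sub>R y) \<le> u * e x + v * e y"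
    proof (cases "u = 0 \<or> v = 0")
      case True then show ?thesis using uv by auto
    next
      case False
      then have u: "0 < u" "u < 1" and v: "v = 1 - u" using uv by auto
      have m: "c < u * x + v * y"
      proof -
        have "u * c + v * c < u * x + v * y" using xy u v
          by (intro add_strict_mono mult_strict_left_mono) auto
        moreover have "u * c + v * c = (u + v) * c" by (simp add: distrib_right)
        ultimately show ?thesis using uv by simp
      qed
      have "ereal (e (u * x + v * y)) = E (u * x + (1 - u) * y)" using fin[OF m] v by simp
      also have "\<dots> \<le> ereal u * E x + ereal (1 - u) * E y" by (rule E_convex[OF u])
      also have "\<dots> = ereal (u * e x + v * e y)" using fin[of x] fin[of y] xy v by simp
      finally show ?thesis by simp
    qed
  qed
  have econt: "continuous_on {c<..} e" by (rule convex_on_continuous[OF open_greaterThan cvx])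
  have all: "continuous (at x within {c..}) E" if x: "c \<le> x" for x
  proof (cases "x = c")
    case False
    then have x': "c < x" using x by simp
    have "isCont e x" using econt x' continuous_on_eq_continuous_at[OF open_greaterThan] by auto
    then have "((\<lambda>R. ereal (e R)) \<longlongrightarrow> ereal (e x)) (at x)" unfolding isCont_def by (rule tendsto_ereal)
    moreover have "eventually (\<lambda>R. ereal (e R) = E R) (at x)"
    proof -
      have "eventually (\<lambda>R. R \<in> {c<..}) (at x)"
        using eventually_at_in_open'[OF open_greaterThan, of x c] x' by simp
      then show ?thesis by (rule eventually_mono) (simp add: fin)
    qed
    ultimately have "(E \<longlongrightarrow> ereal (e x)) (at x)" by (rule Lim_transform_eventually)
    then have "(E \<longlongrightarrow> E x) (at x)" using fin[OF x'] by simp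
    then show ?thesis unfolding continuous_within by (rule tendsto_mono[OF at_le[OF subset_UNIV]])
  next
    case True
    show ?thesis unfolding continuous_within True at_within_Ici_at_right
    proof (rule order_tendstoI)
      fix y assume "y < E c"
      then obtain a where a: "0 < a" "y < T a c" unfolding E_def by (auto simp: less_SUP_iff)
      have "eventually (\<lambda>R. y < T a R) (at_right c)" by (rule order_tendstoD(1)[OF T_tendsto[OF a(1)] a(2)])
      then show "eventually (\<lambda>R. y < E R) (at_right c)"
        by eventually_elim (use E_ge[OF a(1)] in \<open>auto intro: less_le_trans\<close>)
    next
      fix y assume y: "E c < y"
      then have "E c < \<infinity>" by auto
      then obtain ec where ec: "E c = ereal ec" using E_nn[of c] by (cases "E c") auto
      have e1: "E (c + 1) = ereal (e (c + 1))" by (rule fin) simp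
      define h where "h R = (c + 1 - R) * ec + (R - c) * e (c + 1)" for R
      have "((\<lambda>R. ereal (h R)) \<longlongrightarrow> ereal (h c)) (at_right c)"
        unfolding h_def by (intro tendsto_ereal tendsto_intros)
      moreover have "ereal (h c) < y" using y ec by (simp add: h_def)
      ultimately have ev: "eventually (\<lambda>R. ereal (h R) < y) (at_right c)" by (rule order_tendstoD(2))
      have ev2: "eventually (\<lambda>R. c < R \<and> R < c + 1) (at_right c)"
        unfolding eventually_at_right[of c "c + 1", simplified] by (intro exI[of _ "c + 1"]) auto
      show "eventually (\<lambda>R. E R < y) (at_right c)"
        using ev ev2 proof eventually_elim
        case (elim R)
        define l where "l = c + 1 - R"
        have l: "0 < l" "l < 1" using elim by (auto simp: l_def)
        have "E R = E (l * c + (1 - l) * (c + 1))" by (simp add: l_def algebra_simps)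
        also have "\<dots> \<le> ereal l * E c + ereal (1 - l) * E (c + 1)" by (rule E_convex[OF l])
        also have "\<dots> = ereal (h R)" unfolding ec e1 by (simp add: h_def l_def)
        finally show ?case using elim by simp
      qed
    qed
  qed
  show ?thesis unfolding S continuous_on_eq_continuous_within using all by simp
qed

end


lemma cap_mono:
  fixes W :: "'x \<Rightarrow> 'y measure" and M :: "'y measure"
  assumes pw: "\<And>x. prob_space (W x)" and sw: "\<And>x. sets (W x) = sets M"
    and ab: "0 < a" "a \<le> b"
  shows "renyi_cap a W \<le> renyi_cap b W"
  unfolding renyi_cap_def
proof (rule SUP_mono)
  fix p :: "'x pmf" assume p: "p \<in> {p. finite (set_pmf p)}"
  have cp: "chanp W M p" using pw sw p by (simp add: chanp_def)
  show "\<exists>m\<in>{p. finite (set_pmf p)}. ereal (renyi_info a p W) \<le> ereal (renyi_info b m W)"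
    using p chanp.info_mono[OF cp ab] by auto
qed

lemma cap_nn:
  fixes W :: "'x \<Rightarrow> 'y measure" and M :: "'y measure"
  assumes pw: "\<And>x. prob_space (W x)" and sw: "\<And>x. sets (W x) = sets M"
    and a: "0 < a"
  shows "0 \<le> renyi_cap a W"
proof -
  define a' where "a' = min a (1/2)"
  have a': "0 < a'" "a' < 1" "a' \<le> a" using a by (auto simp: a'_def)
  define p0 where "p0 = return_pmf (undefined :: 'x)"
  have fp: "finite (set_pmf p0)" by (simp add: p0_def)
  have cp: "chanp W M p0" using pw sw fp by (simp add: chanp_def)
  have "0 \<le> ereal (renyi_info a' p0 W)" using chanp.info_nonneg[OF cp a'(1,2)] by simp
  also have "\<dots> \<le> renyi_cap a' W" unfolding renyi_cap_def using fp by (intro SUP_upper) auto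
  also have "\<dots> \<le> renyi_cap a W" by (rule cap_mono[OF pw sw a'(1) a'(3)])
  finally show ?thesis .
qed

lemma cap_half:
  fixes W :: "'x \<Rightarrow> 'y measure" and M :: "'y measure"
  assumes pw: "\<And>x. prob_space (W x)" and sw: "\<And>x. sets (W x) = sets M"
    and ab: "0 < a" "a < b" "b < 1"
  shows "renyi_cap b W \<le> ereal (((1 - a) / a) / ((1 - b) / b)) * renyi_cap a W"
  unfolding renyi_cap_def[of b]
proof (rule SUP_least)
  fix p :: "'x pmf" assume p: "p \<in> {p. finite (set_pmf p)}"
  have cp: "chanp W M p" using pw sw p by (simp add: chanp_def)
  define ka where "ka = (1 - a) / a"
  define kb where "kb = (1 - b) / b"
  have ka: "0 < ka" and kb: "0 < kb" using ab by (auto simp: ka_def kb_def)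
  have "kb * renyi_info b p W \<le> ka * renyi_info a p W"
    using chanp.info_scaled[OF cp ab] by (simp add: ka_def kb_def)
  then have "renyi_info b p W \<le> (ka / kb) * renyi_info a p W"
    using kb by (simp add: field_simps)
  then have "ereal (renyi_info b p W) \<le> ereal (ka / kb) * ereal (renyi_info a p W)" by simp
  also have "\<dots> \<le> ereal (ka / kb) * renyi_cap a W"
    using ka kb p unfolding renyi_cap_def by (intro em_mono SUP_upper) auto
  finally show "ereal (renyi_info b p W) \<le> ereal (((1 - a) / a) / ((1 - b) / b)) * renyi_cap a W"
    by (simp add: ka_def kb_def)
qed

theorem lemma13:
  fixes W :: "'x \<Rightarrow> 'y measure" and M :: "'y measure"
  assumes "\<And>x. prob_space (W x)" and "\<And>x. sets (W x) = sets M"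
  shows
    "(\<forall>R1 R2 l. 0 \<le> R1 \<and> 0 \<le> R2 \<and> 0 < l \<and> l < 1 \<longrightarrow>
        E_sp (l * R1 + (1 - l) * R2) W \<le> ereal l * E_sp R1 W + ereal (1 - l) * E_sp R2 W)
   \<and> (\<forall>R. 0 \<le> R \<and> renyi_cap0 W < ereal R \<longrightarrow> \<bar>E_sp R W\<bar> \<noteq> \<infinity>)
   \<and> continuous_on (closure {R. renyi_cap0 W < ereal R} \<inter> {0..}) (\<lambda>R. E_sp R W)
   \<and> (\<forall>R1 R2. 0 < R1 \<and> R1 \<le> R2 \<and> ereal R2 \<le> renyi_cap 1 W \<longrightarrow> E_sp R2 W \<le> E_sp R1 W)
   \<and> (\<forall>R1 R2. 0 \<le> R1 \<and> renyi_cap 1 W \<le> ereal R1 \<and> R1 \<le> R2 \<longrightarrow> E_sp R1 W \<le> E_sp R2 W)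
   \<and> (\<forall>R\<ge>0.
        (ereal R < renyi_cap0 W \<longrightarrow> E_sp R W = \<infinity>)
      \<and> (ereal R = renyi_cap0 W \<longrightarrow> E_sp R W = (SUP \<alpha>\<in>{0<..<1}. sp_term \<alpha> R W))
      \<and> (\<forall>\<phi>. 0 < \<phi> \<and> \<phi> < 1 \<and> ereal R = renyi_cap \<phi> W \<longrightarrow>
           E_sp R W = (SUP \<alpha>\<in>{\<phi>..<1}. sp_term \<alpha> R W))
      \<and> (renyi_cap_ext (cap_order W) W \<le> ereal R \<and> cap_order W = 1 \<longrightarrow> E_sp R W = 0)
      \<and> (\<forall>\<phi>. 1 \<le> \<phi> \<and> ereal \<phi> < cap_order W \<and> ereal R = renyi_cap \<phi> W \<longrightarrow>
           E_sp R W = (SUP \<alpha>\<in>{1..\<phi>}. sp_term \<alpha> R W))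
      \<and> (renyi_cap_ext (cap_order W) W \<le> ereal R \<and> 1 < cap_order W \<longrightarrow>
           E_sp R W = (SUP \<alpha>\<in>{\<alpha>. 1 \<le> \<alpha> \<and> ereal \<alpha> < cap_order W}. sp_term \<alpha> R W)))"
proof -
  interpret cf: capfun "\<lambda>a. renyi_cap a W"
  proof
    fix a b :: real
    show "0 < a \<Longrightarrow> a \<le> b \<Longrightarrow> renyi_cap a W \<le> renyi_cap b W" by (rule cap_mono[OF assms])
    show "0 < a \<Longrightarrow> 0 \<le> renyi_cap a W" by (rule cap_nn[OF assms])
    show "0 < a \<Longrightarrow> a < b \<Longrightarrow> b < 1 \<Longrightarrow> renyi_cap b W \<le> ereal ((1 - a) / a / ((1 - b) / b)) * renyi_cap a W"
      by (rule cap_half[OF assms])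
  qed
  have sp: "sp_term a R W = cf.T a R" for a R by (simp add: sp_term_def cf.T_def)
  have Esp: "E_sp R W = cf.E R" for R by (simp add: E_sp_def cf.E_def sp)
  have c0: "renyi_cap0 W = cf.ci" unfolding renyi_cap0_def by (rule cf.Lim_ci)
  have co: "cap_order W = cf.chi" by (simp add: cap_order_def cf.chi_def)
  have ce: "renyi_cap_ext x W = cf.Cext x" for x by (simp add: renyi_cap_ext_def cf.Cext_def)
  have fin: "\<bar>cf.E R\<bar> \<noteq> \<infinity>" if "0 \<le> R" "cf.ci < ereal R" for R
    using cf.E_fin[OF that(2,1)] cf.E_nn[of R] by auto
  have cont: "continuous_on (closure {R. cf.ci < ereal R} \<inter> {0..}) (\<lambda>R. cf.E R)"
    by (rule cf.E_cont)
  show ?thesis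
  proof (intro conjI allI impI)
    fix R1 R2 l :: real assume "0 \<le> R1 \<and> 0 \<le> R2 \<and> 0 < l \<and> l < 1"
    then show "E_sp (l * R1 + (1 - l) * R2) W \<le> ereal l * E_sp R1 W + ereal (1 - l) * E_sp R2 W"
      unfolding Esp by (intro cf.E_convex) auto
  next
    fix R :: real assume "0 \<le> R \<and> renyi_cap0 W < ereal R"
    then show "\<bar>E_sp R W\<bar> \<noteq> \<infinity>" unfolding Esp c0 using fin by auto
  next
    show "continuous_on (closure {R. renyi_cap0 W < ereal R} \<inter> {0..}) (\<lambda>R. E_sp R W)"
      unfolding Esp c0 by (rule cont)
  next
    fix R1 R2 :: real assume "0 < R1 \<and> R1 \<le> R2 \<and> ereal R2 \<le> renyi_cap 1 W"
    then show "E_sp R2 W \<le> E_sp R1 W" unfolding Esp by (intro cf.E_anti) auto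
  next
    fix R1 R2 :: real assume "0 \<le> R1 \<and> renyi_cap 1 W \<le> ereal R1 \<and> R1 \<le> R2"
    then show "E_sp R1 W \<le> E_sp R2 W" unfolding Esp by (intro cf.E_mono) auto
  next
    fix R :: real assume "0 \<le> R" "ereal R < renyi_cap0 W"
    then show "E_sp R W = \<infinity>" unfolding Esp c0 by (intro cf.E_inf) auto
  next
    fix R :: real assume "0 \<le> R" "ereal R = renyi_cap0 W"
    then show "E_sp R W = (SUP \<alpha>\<in>{0<..<1}. sp_term \<alpha> R W)" unfolding Esp c0 sp
      by (intro cf.E_at_ci) auto
  next
    fix R p :: real assume "0 \<le> R" "0 < p \<and> p < 1 \<and> ereal R = renyi_cap p W"
    then show "E_sp R W = (SUP \<alpha>\<in>{p..<1}. sp_term \<alpha> R W)" unfolding Esp sp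
      by (intro cf.E_at_phi_lt1) auto
  next
    fix R :: real assume "0 \<le> R" "renyi_cap_ext (cap_order W) W \<le> ereal R \<and> cap_order W = 1"
    then show "E_sp R W = 0" unfolding Esp co ce by (intro cf.E_chi1) auto
  next
    fix R p :: real assume "0 \<le> R" "1 \<le> p \<and> ereal p < cap_order W \<and> ereal R = renyi_cap p W"
    then show "E_sp R W = (SUP \<alpha>\<in>{1..p}. sp_term \<alpha> R W)" unfolding Esp sp
      by (intro cf.E_at_phi_ge1) auto
  next
    fix R :: real assume "0 \<le> R" "renyi_cap_ext (cap_order W) W \<le> ereal R \<and> 1 < cap_order W"
    then show "E_sp R W = (SUP \<alpha>\<in>{\<alpha>. 1 \<le> \<alpha> \<and> ereal \<alpha> < cap_order W}. sp_term \<alpha> R W)"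
      unfolding Esp co ce sp by (intro cf.E_chi_gt1) auto
  qed
qed

end
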